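(* (i) For every context $\Gamma$: if $\Gamma\ \mathrm{ok}_s$ then $\Gamma\ \mathrm{ok}$. (ii) For every context $\Gamma$ and terms $M,A$: if $\Gamma\vdash_s M:A$ then $\Gamma\vdash M:A$.
   Context: Let $\mathcal V$ (the variables) be a type with decidable equality, equipped with functions $\mathrm{encode}:\mathcal V\to\mathbb N$ and $\mathrm{decode}:\mathbb N\to\mathcal V$ such that $\mathrm{encode}(\mathrm{decode}\,n)=n$ for all $n$. Let $\mathcal C$ (the constants) be any type. Terms $\Lambda$ are generated by: $c\,k$ ($k\in\mathcal C$), $v\,x$ ($x\in\mathcal V$), $\lambda[x:A]M$, $\Pi[x:A]B$ and $M\cdot N$; in $\lambda[x:A]M$ and $\Pi[x:A]B$ the name $x$ binds in $M$ (resp. $B$) but not in $A$. Terms are raw first-order syntax (not identified up to renaming of bound variables) and $\equiv$ denotes syntactic identity. The list of free variables is $\mathrm{fv}(c\,k)=[\,]$, $\mathrm{fv}(v\,x)=[x]$, $\mathrm{fv}(\lambda[x:A]M)=\mathrm{fv}\,A\mathbin{+\!\!+}(\mathrm{fv}\,M-x)$, $\mathrm{fv}(\Pi[x:A]B)=\mathrm{fv}\,A\mathbin{+\!\!+}(\mathrm{fv}\,B-x)$, $\mathrm{fv}(M\cdot N)=\mathrm{fv}\,M\mathbin{+\!\!+}\mathrm{fv}\,N$, where $\mathbin{+\!\!+}$ is list concatenation and $xs-x$ deletes every occurrence of $x$ from $xs$. Fix a function $\chi':\mathrm{List}\,\mathbb N\to\mathbb N$ with $\chi'(ns)\notin ns$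 for every list $ns$, and put $X'(xs)=\mathrm{decode}(\chi'(\mathrm{map}\ \mathrm{encode}\ xs))$. A substitution is any function $\sigma:\mathcal V\to\Lambda$; $\iota=v$ is the identity substitution; $(\sigma,x:=N)(y)=N$ if $y=x$ and $\sigma\,y$ otherwise. For a substitution $\sigma$ and a list $xs$ of variables, $X(\sigma,xs)=X'(\text{concatenation of the lists }\mathrm{fv}(\sigma\,y)\text{ for }y\in xs)$. The action $M\bullet\sigma$ is defined by structural recursion: $c\,k\bullet\sigma=c\,k$; $v\,x\bullet\sigma=\sigma\,x$; $(M\cdot N)\bullet\sigma=(M\bullet\sigma)\cdot(N\bullet\sigma)$; $(\lambda[x:A]M)\bullet\sigma=\lambda[y:A\bullet\sigma](M\bullet(\sigma,x:=v\,y))$ with $y=X(\sigma,\mathrm{fv}\,M-x)$; $(\Pi[x:A]B)\bullet\sigma=\Pi[y:A\bullet\sigma](B\bullet(\sigma,x:=v\,y))$ with $y=X(\sigma,\mathrm{fv}\,B-x)$. Unary substitution is $M[x:=N]=M\bullet(\iota,x:=N)$. $\alpha$-conversion $\sim_\alpha$ is the inductively defined relation with rules: $c\,k\sim_\alpha c\,k$; $v\,x\sim_\alpha v\,x$; $M\cdot N\sim_\alpha M'\cdot N'$ if $M\sim_\alpha M'$ and $N\sim_\alpha N'$; $\lambda[x:A]M\sim_\alpha\lambda[x':A']M'$ if $A\sim_\alpha A'$ and there is a variable $y$ with $y\notin\mathrm{fv}\,M-x$, $y\notin\mathrm{fv}\,M'-x'$ and $M[x:=v\,y]\equiv M'[x':=v\,y]$;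 and the same rule with $\Pi$ in place of $\lambda$. $\beta$-contraction is $(\lambda[x:A]M)\cdot N\ \triangleright_\beta\ M[x:=N]$. One-step $\beta$-reduction $\to_\beta$ is its contextual closure, inductively: $M\to_\beta N$ if $M\triangleright_\beta N$; $\lambda[x:A]M\to_\beta\lambda[x:A]M'$ and $\Pi[x:A]M\to_\beta\Pi[x:A]M'$ if $M\to_\beta M'$; $\lambda[x:A]M\to_\beta\lambda[x:A']M$ and $\Pi[x:A]M\to_\beta\Pi[x:A']M$ if $A\to_\beta A'$; $M\cdot P\to_\beta N\cdot P$ and $P\cdot M\to_\beta P\cdot N$ if $M\to_\beta N$. $\beta$-conversion $\simeq_\beta$ is the equivalence (reflexive–symmetric–transitive) closure of $\sim_\alpha\cup\to_\beta$. Pure Type System: fix a binary relation $\mathcal A\subseteq\mathcal C\times\mathcal C$ (axioms) and a ternary relation $\mathcal R\subseteq\mathcal C\times\mathcal C\times\mathcal C$ (rules). A context is a finite list of pairs $(x,A)$ with $x\in\mathcal V$, $A\in\Lambda$; $\Gamma,x:A$ denotes the list $(x,A)::\Gamma$; $\mathrm{dom}\,\Gamma$ is the list of first components; $(x,A)\in\Gamma$ is list membership. The judgments $\Gamma\ \mathrm{ok}$ and $\Gamma\vdash M:A$ are defined mutually inductively by: (nil) $[\,]\ \mathrm{ok}$; (cons) if $\Gamma\ \mathrm{ok}$, $\Gamma\vdash A:c\,s$ and $x\notin\mathrm{dom}\,\Gamma$ then $\Gamma,x:A\ \mathrm{ok}$; (sort) if $\Gamma\ \mathrm{ok}$ and $\mathcal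 A\,s_1\,s_2$ then $\Gamma\vdash c\,s_1:c\,s_2$; (var) if $\Gamma\ \mathrm{ok}$ and $(x,A)\in\Gamma$ then $\Gamma\vdash v\,x:A$; (prod) if $\mathcal R\,s_1\,s_2\,s_3$, $\Gamma\vdash A:c\,s_1$ and for every $y\notin\mathrm{dom}\,\Gamma$, $\Gamma,y:A\vdash B[x:=v\,y]:c\,s_2$, then $\Gamma\vdash\Pi[x:A]B:c\,s_3$; (abs) if $\mathcal R\,s_1\,s_2\,s_3$, $\Gamma\vdash A:c\,s_1$, for every $z\notin\mathrm{dom}\,\Gamma$, $\Gamma,z:A\vdash B[y:=v\,z]:c\,s_2$, and for every $z\notin\mathrm{dom}\,\Gamma$, $\Gamma,z:A\vdash M[x:=v\,z]:B[y:=v\,z]$, then $\Gamma\vdash\lambda[x:A]M:\Pi[y:A]B$; (app) if $\Gamma\vdash M:\Pi[x:A]B$, $\Gamma\vdash N:A$ and $\Gamma\vdash B[x:=N]:c\,s$ for some $s$, then $\Gamma\vdash M\cdot N:B[x:=N]$; (conv) if $\Gamma\vdash M:A$, $A\simeq_\beta B$ and $\Gamma\vdash B:c\,s$ for some $s$, then $\Gamma\vdash M:B$. (The premises quantified over all fresh names in (prod) and (abs) are infinitely branching.) Finitary (standard) presentation: the judgments $\Gamma\ \mathrm{ok}_s$ and $\Gamma\vdash_s M:A$ are defined mutually inductively by: (nil) $[\,]\ \mathrm{ok}_s$; (cons) if $\Gamma\ \mathrm{ok}_s$, $\Gamma\vdash_s A:c\,s$ and $x\notin\mathrm{dom}\,\Gamma$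 then $\Gamma,x:A\ \mathrm{ok}_s$; (sort) if $\Gamma\ \mathrm{ok}_s$ and $\mathcal A\,s_1\,s_2$ then $\Gamma\vdash_s c\,s_1:c\,s_2$; (var) if $\Gamma\ \mathrm{ok}_s$ and $(x,A)\in\Gamma$ then $\Gamma\vdash_s v\,x:A$; (prod) if $\mathcal R\,s_1\,s_2\,s_3$, $y\notin\mathrm{fv}\,B-x$, $\Gamma\vdash_s A:c\,s_1$ and $\Gamma,y:A\vdash_s B[x:=v\,y]:c\,s_2$, then $\Gamma\vdash_s\Pi[x:A]B:c\,s_3$; (abs) if $\mathcal R\,s_1\,s_2\,s_3$, $z\notin\mathrm{fv}\,M-x$, $z\notin\mathrm{fv}\,B-y$, $\Gamma\vdash_s A:c\,s_1$, $\Gamma,z:A\vdash_s B[y:=v\,z]:c\,s_2$ and $\Gamma,z:A\vdash_s M[x:=v\,z]:B[y:=v\,z]$, then $\Gamma\vdash_s\lambda[x:A]M:\Pi[y:A]B$; (app) if $\Gamma\vdash_s M:\Pi[x:A]B$ and $\Gamma\vdash_s N:A$ then $\Gamma\vdash_s M\cdot N:B[x:=N]$; (conv) if $\Gamma\vdash_s M:A$, $A\simeq_\beta B$ and $\Gamma\vdash_s B:c\,s$ for some $s$, then $\Gamma\vdash_s M:B$. *)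

theory Defs
  imports Main
begin

datatype ('c, 'v) trm =
    Cst 'c
  | Var 'v
  | Lam 'v "('c, 'v) trm" "('c, 'v) trm"
  | Pi  'v "('c, 'v) trm" "('c, 'v) trm"
  | App "('c, 'v) trm" "('c, 'v) trm"

fun fv :: "('c, 'v) trm \<Rightarrow> 'v list" where
  "fv (Cst k) = []"
| "fv (Var x) = [x]"
| "fv (Lam x A M) = fv A @ removeAll x (fv M)"
| "fv (Pi x A B) = fv A @ removeAll x (fv B)"
| "fv (App M N) = fv M @ fv N"

definition Xp :: "('v \<Rightarrow> nat) \<Rightarrow> (nat \<Rightarrow> 'v) \<Rightarrow> (nat list \<Rightarrow> nat) \<Rightarrow> 'v list \<Rightarrow> 'v" where
  "Xp enc dec chi xs = dec (chi (map enc xs))"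

definition Xs :: "('v \<Rightarrow> nat) \<Rightarrow> (nat \<Rightarrow> 'v) \<Rightarrow> (nat list \<Rightarrow> nat) \<Rightarrow>
    ('v \<Rightarrow> ('c, 'v) trm) \<Rightarrow> 'v list \<Rightarrow> 'v" where
  "Xs enc dec chi \<sigma> xs = Xp enc dec chi (concat (map (\<lambda>y. fv (\<sigma> y)) xs))"

definition supd :: "('v \<Rightarrow> ('c, 'v) trm) \<Rightarrow> 'v \<Rightarrow> ('c, 'v) trm \<Rightarrow> 'v \<Rightarrow> ('c, 'v) trm" where
  "supd \<sigma> x N = (\<lambda>y. if y = x then N else \<sigma> y)"

primrec sact :: "('v \<Rightarrow> nat) \<Rightarrow> (nat \<Rightarrow> 'v) \<Rightarrow> (nat list \<Rightarrow> nat) \<Rightarrow>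
    ('c, 'v) trm \<Rightarrow> ('v \<Rightarrow> ('c, 'v) trm) \<Rightarrow> ('c, 'v) trm" where
  "sact enc dec chi (Cst k) \<sigma> = Cst k"
| "sact enc dec chi (Var x) \<sigma> = \<sigma> x"
| "sact enc dec chi (App M N) \<sigma> = App (sact enc dec chi M \<sigma>) (sact enc dec chi N \<sigma>)"
| "sact enc dec chi (Lam x A M) \<sigma> =
     (let y = Xs enc dec chi \<sigma> (removeAll x (fv M))
      in Lam y (sact enc dec chi A \<sigma>) (sact enc dec chi M (supd \<sigma> x (Var y))))"
| "sact enc dec chi (Pi x A B) \<sigma> =
     (let y = Xs enc dec chi \<sigma> (removeAll x (fv B))
      in Pi y (sact enc dec chi A \<sigma>) (sact enc dec chi B (supd \<sigma> x (Var y))))"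

definition usubst :: "('v \<Rightarrow> nat) \<Rightarrow> (nat \<Rightarrow> 'v) \<Rightarrow> (nat list \<Rightarrow> nat) \<Rightarrow>
    ('c, 'v) trm \<Rightarrow> 'v \<Rightarrow> ('c, 'v) trm \<Rightarrow> ('c, 'v) trm" where
  "usubst enc dec chi M x N = sact enc dec chi M (supd Var x N)"

inductive alpha :: "('v \<Rightarrow> nat) \<Rightarrow> (nat \<Rightarrow> 'v) \<Rightarrow> (nat list \<Rightarrow> nat) \<Rightarrow>
    ('c, 'v) trm \<Rightarrow> ('c, 'v) trm \<Rightarrow> bool"
  for enc dec chi where
  a_cst: "alpha enc dec chi (Cst k) (Cst k)"
| a_var: "alpha enc dec chi (Var x) (Var x)"
| a_app: "alpha enc dec chi M M' \<Longrightarrow> alpha enc dec chi N N' \<Longrightarrow>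
          alpha enc dec chi (App M N) (App M' N')"
| a_lam: "alpha enc dec chi A A' \<Longrightarrow> y \<notin> set (removeAll x (fv M)) \<Longrightarrow>
          y \<notin> set (removeAll x' (fv M')) \<Longrightarrow>
          usubst enc dec chi M x (Var y) = usubst enc dec chi M' x' (Var y) \<Longrightarrow>
          alpha enc dec chi (Lam x A M) (Lam x' A' M')"
| a_pi: "alpha enc dec chi A A' \<Longrightarrow> y \<notin> set (removeAll x (fv M)) \<Longrightarrow>
          y \<notin> set (removeAll x' (fv M')) \<Longrightarrow>
          usubst enc dec chi M x (Var y) = usubst enc dec chi M' x' (Var y) \<Longrightarrow>
          alpha enc dec chi (Pi x A M) (Pi x' A' M')"

inductive beta :: "('v \<Rightarrow> nat) \<Rightarrow> (nat \<Rightarrow> 'v) \<Rightarrow> (nat list \<Rightarrow> nat) \<Rightarrow>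
    ('c, 'v) trm \<Rightarrow> ('c, 'v) trm \<Rightarrow> bool"
  for enc dec chi where
  b_contr: "beta enc dec chi (App (Lam x A M) N) (usubst enc dec chi M x N)"
| b_lam_body: "beta enc dec chi M M' \<Longrightarrow> beta enc dec chi (Lam x A M) (Lam x A M')"
| b_pi_body: "beta enc dec chi M M' \<Longrightarrow> beta enc dec chi (Pi x A M) (Pi x A M')"
| b_lam_ty: "beta enc dec chi A A' \<Longrightarrow> beta enc dec chi (Lam x A M) (Lam x A' M)"
| b_pi_ty: "beta enc dec chi A A' \<Longrightarrow> beta enc dec chi (Pi x A M) (Pi x A' M)"
| b_app_l: "beta enc dec chi M N \<Longrightarrow> beta enc dec chi (App M P) (App N P)"
| b_app_r: "beta enc dec chi M N \<Longrightarrow> beta enc dec chi (App P M) (App P N)"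

definition betaconv :: "('v \<Rightarrow> nat) \<Rightarrow> (nat \<Rightarrow> 'v) \<Rightarrow> (nat list \<Rightarrow> nat) \<Rightarrow>
    ('c, 'v) trm \<Rightarrow> ('c, 'v) trm \<Rightarrow> bool" where
  "betaconv enc dec chi = equivclp (sup (alpha enc dec chi) (beta enc dec chi))"

type_synonym ('c, 'v) ctx = "('v \<times> ('c, 'v) trm) list"

text \<open>Infinitary PTS presentation (cofinite quantification over fresh names).\<close>
inductive ctx_ok :: "('v \<Rightarrow> nat) \<Rightarrow> (nat \<Rightarrow> 'v) \<Rightarrow> (nat list \<Rightarrow> nat) \<Rightarrow>
      ('c \<Rightarrow> 'c \<Rightarrow> bool) \<Rightarrow> ('c \<Rightarrow> 'c \<Rightarrow> 'c \<Rightarrow> bool) \<Rightarrow> ('c, 'v) ctx \<Rightarrow> bool"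
  and has_type :: "('v \<Rightarrow> nat) \<Rightarrow> (nat \<Rightarrow> 'v) \<Rightarrow> (nat list \<Rightarrow> nat) \<Rightarrow>
      ('c \<Rightarrow> 'c \<Rightarrow> bool) \<Rightarrow> ('c \<Rightarrow> 'c \<Rightarrow> 'c \<Rightarrow> bool) \<Rightarrow> ('c, 'v) ctx \<Rightarrow>
      ('c, 'v) trm \<Rightarrow> ('c, 'v) trm \<Rightarrow> bool"
  for enc dec chi Ax Rl where
  ok_nil: "ctx_ok enc dec chi Ax Rl []"
| ok_cons: "ctx_ok enc dec chi Ax Rl \<Gamma> \<Longrightarrow> has_type enc dec chi Ax Rl \<Gamma> A (Cst s) \<Longrightarrow>
            x \<notin> set (map fst \<Gamma>) \<Longrightarrow> ctx_ok enc dec chi Ax Rl ((x, A) # \<Gamma>)"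
| t_sort: "ctx_ok enc dec chi Ax Rl \<Gamma> \<Longrightarrow> Ax s1 s2 \<Longrightarrow>
           has_type enc dec chi Ax Rl \<Gamma> (Cst s1) (Cst s2)"
| t_var: "ctx_ok enc dec chi Ax Rl \<Gamma> \<Longrightarrow> (x, A) \<in> set \<Gamma> \<Longrightarrow>
          has_type enc dec chi Ax Rl \<Gamma> (Var x) A"
| t_prod: "Rl s1 s2 s3 \<Longrightarrow> has_type enc dec chi Ax Rl \<Gamma> A (Cst s1) \<Longrightarrow>
           (\<forall>y. y \<notin> set (map fst \<Gamma>) \<longrightarrow>
              has_type enc dec chi Ax Rl ((y, A) # \<Gamma>) (usubst enc dec chi B x (Var y)) (Cst s2)) \<Longrightarrow>
           has_type enc dec chi Ax Rl \<Gamma> (Pi x A B) (Cst s3)"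
| t_abs: "Rl s1 s2 s3 \<Longrightarrow> has_type enc dec chi Ax Rl \<Gamma> A (Cst s1) \<Longrightarrow>
          (\<forall>z. z \<notin> set (map fst \<Gamma>) \<longrightarrow>
             has_type enc dec chi Ax Rl ((z, A) # \<Gamma>) (usubst enc dec chi B y (Var z)) (Cst s2)) \<Longrightarrow>
          (\<forall>z. z \<notin> set (map fst \<Gamma>) \<longrightarrow>
             has_type enc dec chi Ax Rl ((z, A) # \<Gamma>) (usubst enc dec chi M x (Var z))
                 (usubst enc dec chi B y (Var z))) \<Longrightarrow>
          has_type enc dec chi Ax Rl \<Gamma> (Lam x A M) (Pi y A B)"
| t_app: "has_type enc dec chi Ax Rl \<Gamma> M (Pi x A B) \<Longrightarrow> has_type enc dec chi Ax Rl \<Gamma> N A \<Longrightarrow>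
          has_type enc dec chi Ax Rl \<Gamma> (usubst enc dec chi B x N) (Cst s) \<Longrightarrow>
          has_type enc dec chi Ax Rl \<Gamma> (App M N) (usubst enc dec chi B x N)"
| t_conv: "has_type enc dec chi Ax Rl \<Gamma> M A \<Longrightarrow> betaconv enc dec chi A B \<Longrightarrow>
           has_type enc dec chi Ax Rl \<Gamma> B (Cst s) \<Longrightarrow> has_type enc dec chi Ax Rl \<Gamma> M B"

inductive ctx_ok_s :: "('v \<Rightarrow> nat) \<Rightarrow> (nat \<Rightarrow> 'v) \<Rightarrow> (nat list \<Rightarrow> nat) \<Rightarrow>
      ('c \<Rightarrow> 'c \<Rightarrow> bool) \<Rightarrow> ('c \<Rightarrow> 'c \<Rightarrow> 'c \<Rightarrow> bool) \<Rightarrow> ('c, 'v) ctx \<Rightarrow> bool"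
  and has_type_s :: "('v \<Rightarrow> nat) \<Rightarrow> (nat \<Rightarrow> 'v) \<Rightarrow> (nat list \<Rightarrow> nat) \<Rightarrow>
      ('c \<Rightarrow> 'c \<Rightarrow> bool) \<Rightarrow> ('c \<Rightarrow> 'c \<Rightarrow> 'c \<Rightarrow> bool) \<Rightarrow> ('c, 'v) ctx \<Rightarrow>
      ('c, 'v) trm \<Rightarrow> ('c, 'v) trm \<Rightarrow> bool"
  for enc dec chi Ax Rl where
  oks_nil: "ctx_ok_s enc dec chi Ax Rl []"
| oks_cons: "ctx_ok_s enc dec chi Ax Rl \<Gamma> \<Longrightarrow> has_type_s enc dec chi Ax Rl \<Gamma> A (Cst s) \<Longrightarrow>
            x \<notin> set (map fst \<Gamma>) \<Longrightarrow> ctx_ok_s enc dec chi Ax Rl ((x, A) # \<Gamma>)"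
| ts_sort: "ctx_ok_s enc dec chi Ax Rl \<Gamma> \<Longrightarrow> Ax s1 s2 \<Longrightarrow>
           has_type_s enc dec chi Ax Rl \<Gamma> (Cst s1) (Cst s2)"
| ts_var: "ctx_ok_s enc dec chi Ax Rl \<Gamma> \<Longrightarrow> (x, A) \<in> set \<Gamma> \<Longrightarrow>
          has_type_s enc dec chi Ax Rl \<Gamma> (Var x) A"
| ts_prod: "Rl s1 s2 s3 \<Longrightarrow> y \<notin> set (removeAll x (fv B)) \<Longrightarrow>
           has_type_s enc dec chi Ax Rl \<Gamma> A (Cst s1) \<Longrightarrow>
           has_type_s enc dec chi Ax Rl ((y, A) # \<Gamma>) (usubst enc dec chi B x (Var y)) (Cst s2) \<Longrightarrow>
           has_type_s enc dec chi Ax Rl \<Gamma> (Pi x A B) (Cst s3)"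
| ts_abs: "Rl s1 s2 s3 \<Longrightarrow> z \<notin> set (removeAll x (fv M)) \<Longrightarrow> z \<notin> set (removeAll y (fv B)) \<Longrightarrow>
          has_type_s enc dec chi Ax Rl \<Gamma> A (Cst s1) \<Longrightarrow>
          has_type_s enc dec chi Ax Rl ((z, A) # \<Gamma>) (usubst enc dec chi B y (Var z)) (Cst s2) \<Longrightarrow>
          has_type_s enc dec chi Ax Rl ((z, A) # \<Gamma>) (usubst enc dec chi M x (Var z))
                 (usubst enc dec chi B y (Var z)) \<Longrightarrow>
          has_type_s enc dec chi Ax Rl \<Gamma> (Lam x A M) (Pi y A B)"
| ts_app: "has_type_s enc dec chi Ax Rl \<Gamma> M (Pi x A B) \<Longrightarrow> has_type_s enc dec chi Ax Rl \<Gamma> N A \<Longrightarrow>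
          has_type_s enc dec chi Ax Rl \<Gamma> (App M N) (usubst enc dec chi B x N)"
| ts_conv: "has_type_s enc dec chi Ax Rl \<Gamma> M A \<Longrightarrow> betaconv enc dec chi A B \<Longrightarrow>
           has_type_s enc dec chi Ax Rl \<Gamma> B (Cst s) \<Longrightarrow> has_type_s enc dec chi Ax Rl \<Gamma> M B"

end

theory Submission
  imports Defs
begin

locale pts =
  fixes enc :: "'v \<Rightarrow> nat" and dec :: "nat \<Rightarrow> 'v" and chi :: "nat list \<Rightarrow> nat"
  assumes enc_dec: "\<And>n. enc (dec n) = n"
    and chi_fresh: "\<And>ns. chi ns \<notin> set ns"
begin

abbreviation S :: "('c, 'v) trm \<Rightarrow> ('v \<Rightarrow> ('c, 'v) trm) \<Rightarrow> ('c, 'v) trm" where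
  "S M \<sigma> \<equiv> sact enc dec chi M \<sigma>"

lemma Xp_fresh: "Xp enc dec chi xs \<notin> set xs"
proof
  assume "Xp enc dec chi xs \<in> set xs"
  then have "enc (dec (chi (map enc xs))) \<in> set (map enc xs)" unfolding Xp_def by simp
  then show False using enc_dec chi_fresh by (metis list.set_map)
qed

lemma Xs_fresh: "w \<in> set L \<Longrightarrow> Xs enc dec chi \<sigma> L \<notin> set (fv (\<sigma> w))"
  using Xp_fresh[of "concat (map (\<lambda>y. fv (\<sigma> y)) L)"] unfolding Xs_def by auto

lemma Xs_Var: "Xs enc dec chi Var L = Xp enc dec chi L"
proof -
  have "concat (map (\<lambda>y. fv (Var y :: ('c,'v) trm)) L) = L" by (induction L) auto
  then show ?thesis unfolding Xs_def by simp
qed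

lemma rem_concat:
  "(\<forall>w\<in>set (removeAll x L). y \<notin> set (fv (\<sigma> w))) \<Longrightarrow>
   removeAll y (concat (map (\<lambda>w. fv (supd \<sigma> x (Var y) w)) L)) = concat (map (\<lambda>w. fv (\<sigma> w)) (removeAll x L))"
  by (induction L) (auto simp: supd_def removeAll_id)

lemma fv_sact: "fv (S M \<sigma>) = concat (map (\<lambda>y. fv (\<sigma> y)) (fv M))"
proof (induction M arbitrary: \<sigma>)
  case (Lam x A M)
  let ?y = "Xs enc dec chi \<sigma> (removeAll x (fv M))"
  have "removeAll ?y (fv (S M (supd \<sigma> x (Var ?y)))) = concat (map (\<lambda>w. fv (\<sigma> w)) (removeAll x (fv M)))"
    unfolding Lam.IH(2) by (rule rem_concat) (simp add: Xs_fresh)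
  moreover have "S (Lam x A M) \<sigma> = Lam ?y (S A \<sigma>) (S M (supd \<sigma> x (Var ?y)))" by (simp only: sact.simps Let_def)
  ultimately show ?case by (simp only: fv.simps Lam.IH(1) map_append concat_append)
next
  case (Pi x A M)
  let ?y = "Xs enc dec chi \<sigma> (removeAll x (fv M))"
  have "removeAll ?y (fv (S M (supd \<sigma> x (Var ?y)))) = concat (map (\<lambda>w. fv (\<sigma> w)) (removeAll x (fv M)))"
    unfolding Pi.IH(2) by (rule rem_concat) (simp add: Xs_fresh)
  moreover have "S (Pi x A M) \<sigma> = Pi ?y (S A \<sigma>) (S M (supd \<sigma> x (Var ?y)))" by (simp only: sact.simps Let_def)
  ultimately show ?case by (simp only: fv.simps Pi.IH(1) map_append concat_append)
qed auto

lemma sact_cong: "(\<And>w. w \<in> set (fv M) \<Longrightarrow> \<sigma> w = \<sigma>' w) \<Longrightarrow> S M \<sigma> = S M \<sigma>'"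
proof (induction M arbitrary: \<sigma> \<sigma>')
  case (Lam x A M)
  have e: "Xs enc dec chi \<sigma> (removeAll x (fv M)) = Xs enc dec chi \<sigma>' (removeAll x (fv M))"
  proof -
    have "map (\<lambda>y. fv (\<sigma> y)) (removeAll x (fv M)) = map (\<lambda>y. fv (\<sigma>' y)) (removeAll x (fv M))"
      using Lam.prems by simp
    then show ?thesis unfolding Xs_def by metis
  qed
  have a: "S A \<sigma> = S A \<sigma>'" using Lam.prems by (intro Lam.IH(1)) simp
  have m: "S M (supd \<sigma> x (Var y)) = S M (supd \<sigma>' x (Var y))" for y
    using Lam.prems by (intro Lam.IH(2)) (simp add: supd_def)
  show ?case by (simp only: sact.simps Let_def e a m)
next
  case (Pi x A M)
  have e: "Xs enc dec chi \<sigma> (removeAll x (fv M)) = Xs enc dec chi \<sigma>' (removeAll x (fv M))"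
  proof -
    have "map (\<lambda>y. fv (\<sigma> y)) (removeAll x (fv M)) = map (\<lambda>y. fv (\<sigma>' y)) (removeAll x (fv M))"
      using Pi.prems by simp
    then show ?thesis unfolding Xs_def by metis
  qed
  have a: "S A \<sigma> = S A \<sigma>'" using Pi.prems by (intro Pi.IH(1)) simp
  have m: "S M (supd \<sigma> x (Var y)) = S M (supd \<sigma>' x (Var y))" for y
    using Pi.prems by (intro Pi.IH(2)) (simp add: supd_def)
  show ?case by (simp only: sact.simps Let_def e a m)
next
  case (App M N)
  have "S M \<sigma> = S M \<sigma>'" "S N \<sigma> = S N \<sigma>'" using App.prems by (intro App.IH; simp)+
  then show ?case by simp
qed simp_all

lemma concat_map_concat: "concat (map f (concat (map g L))) = concat (map (\<lambda>w. concat (map f (g w))) L)"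
  by (induction L) auto

lemma rem_fv_sact:
  "removeAll (Xs enc dec chi \<sigma> (removeAll x (fv M)))
     (fv (S M (supd \<sigma> x (Var (Xs enc dec chi \<sigma> (removeAll x (fv M)))))))
   = concat (map (\<lambda>w. fv (\<sigma> w)) (removeAll x (fv M)))"
  unfolding fv_sact by (rule rem_concat) (simp add: Xs_fresh)

lemma sact_comp: "S (S M \<sigma>) \<tau> = S M (\<lambda>w. S (\<sigma> w) \<tau>)"
proof (induction M arbitrary: \<sigma> \<tau>)
  case (Lam x A M)
  define y1 where "y1 = Xs enc dec chi \<sigma> (removeAll x (fv M))"
  define y2 where "y2 = Xs enc dec chi \<tau> (removeAll y1 (fv (S M (supd \<sigma> x (Var y1)))))"
  define y3 where "y3 = Xs enc dec chi (\<lambda>w. S (\<sigma> w) \<tau>) (removeAll x (fv M))"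
  have r: "removeAll y1 (fv (S M (supd \<sigma> x (Var y1)))) = concat (map (\<lambda>w. fv (\<sigma> w)) (removeAll x (fv M)))"
    unfolding y1_def by (rule rem_fv_sact)
  have e23: "y2 = y3" unfolding y2_def y3_def Xs_def r unfolding fv_sact concat_map_concat ..
  have b: "S (S M (supd \<sigma> x (Var y1))) (supd \<tau> y1 (Var y2)) = S M (supd (\<lambda>w. S (\<sigma> w) \<tau>) x (Var y3))"
    unfolding Lam.IH(2)
  proof (rule sact_cong)
    fix w assume w: "w \<in> set (fv M)"
    show "S (supd \<sigma> x (Var y1) w) (supd \<tau> y1 (Var y2)) = supd (\<lambda>w. S (\<sigma> w) \<tau>) x (Var y3) w"
    proof (cases "w = x")
      case True then show ?thesis by (simp add: supd_def e23)
    next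
      case False
      then have "y1 \<notin> set (fv (\<sigma> w))" unfolding y1_def using w by (intro Xs_fresh) simp
      then have "S (\<sigma> w) (supd \<tau> y1 (Var y2)) = S (\<sigma> w) \<tau>" by (intro sact_cong) (auto simp: supd_def)
      then show ?thesis using False by (simp add: supd_def)
    qed
  qed
  have l1: "S (Lam x A M) \<sigma> = Lam y1 (S A \<sigma>) (S M (supd \<sigma> x (Var y1)))" by (simp add: y1_def Let_def)
  have l2: "S (Lam y1 (S A \<sigma>) (S M (supd \<sigma> x (Var y1)))) \<tau> = Lam y2 (S (S A \<sigma>) \<tau>) (S (S M (supd \<sigma> x (Var y1))) (supd \<tau> y1 (Var y2)))"
    by (simp only: sact.simps Let_def y2_def)
  have l3: "S (Lam x A M) (\<lambda>w. S (\<sigma> w) \<tau>) = Lam y3 (S A (\<lambda>w. S (\<sigma> w) \<tau>)) (S M (supd (\<lambda>w. S (\<sigma> w) \<tau>) x (Var y3)))"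
    by (simp only: sact.simps Let_def y3_def)
  show ?case unfolding l1 l2 l3 Lam.IH(1) b unfolding e23 ..
next
  case (Pi x A M)
  define y1 where "y1 = Xs enc dec chi \<sigma> (removeAll x (fv M))"
  define y2 where "y2 = Xs enc dec chi \<tau> (removeAll y1 (fv (S M (supd \<sigma> x (Var y1)))))"
  define y3 where "y3 = Xs enc dec chi (\<lambda>w. S (\<sigma> w) \<tau>) (removeAll x (fv M))"
  have r: "removeAll y1 (fv (S M (supd \<sigma> x (Var y1)))) = concat (map (\<lambda>w. fv (\<sigma> w)) (removeAll x (fv M)))"
    unfolding y1_def by (rule rem_fv_sact)
  have e23: "y2 = y3" unfolding y2_def y3_def Xs_def r unfolding fv_sact concat_map_concat ..
  have b: "S (S M (supd \<sigma> x (Var y1))) (supd \<tau> y1 (Var y2)) = S M (supd (\<lambda>w. S (\<sigma> w) \<tau>) x (Var y3))"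
    unfolding Pi.IH(2)
  proof (rule sact_cong)
    fix w assume w: "w \<in> set (fv M)"
    show "S (supd \<sigma> x (Var y1) w) (supd \<tau> y1 (Var y2)) = supd (\<lambda>w. S (\<sigma> w) \<tau>) x (Var y3) w"
    proof (cases "w = x")
      case True then show ?thesis by (simp add: supd_def e23)
    next
      case False
      then have "y1 \<notin> set (fv (\<sigma> w))" unfolding y1_def using w by (intro Xs_fresh) simp
      then have "S (\<sigma> w) (supd \<tau> y1 (Var y2)) = S (\<sigma> w) \<tau>" by (intro sact_cong) (auto simp: supd_def)
      then show ?thesis using False by (simp add: supd_def)
    qed
  qed
  have l1: "S (Pi x A M) \<sigma> = Pi y1 (S A \<sigma>) (S M (supd \<sigma> x (Var y1)))" by (simp add: y1_def Let_def)
  have l2: "S (Pi y1 (S A \<sigma>) (S M (supd \<sigma> x (Var y1)))) \<tau> = Pi y2 (S (S A \<sigma>) \<tau>) (S (S M (supd \<sigma> x (Var y1))) (supd \<tau> y1 (Var y2)))"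
    by (simp only: sact.simps Let_def y2_def)
  have l3: "S (Pi x A M) (\<lambda>w. S (\<sigma> w) \<tau>) = Pi y3 (S A (\<lambda>w. S (\<sigma> w) \<tau>)) (S M (supd (\<lambda>w. S (\<sigma> w) \<tau>) x (Var y3)))"
    by (simp only: sact.simps Let_def y3_def)
  show ?case unfolding l1 l2 l3 Pi.IH(1) b unfolding e23 ..
next
  case (App M N) show ?case by (simp only: sact.simps App.IH)
qed simp_all

lemma sact_Var_comp: "S (S M Var) \<tau> = S M \<tau>"
  by (simp add: sact_comp)

lemma iota_idem: "S (S M Var) Var = S M Var"
  by (rule sact_Var_comp)

lemma iota_eq_subst: "S M Var = S N Var \<Longrightarrow> S M \<tau> = S N \<tau>"
  by (metis sact_Var_comp)

lemma concat_Var: "concat (map (\<lambda>y. fv (Var y :: ('c,'v) trm)) L) = L" by (induction L) auto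

lemma fv_iota: "fv (S M Var) = fv M"
  by (simp add: fv_sact concat_Var)

lemma set_fv_sact: "set (fv (S M \<sigma>)) = (\<Union>w\<in>set (fv M). set (fv (\<sigma> w)))"
  by (simp add: fv_sact)

lemma iota_Lam: "S (Lam x A M) Var = Lam (Xp enc dec chi (removeAll x (fv M))) (S A Var) (S M (supd Var x (Var (Xp enc dec chi (removeAll x (fv M))))))"
  by (simp only: sact.simps Let_def Xs_Var)

lemma iota_Pi: "S (Pi x A M) Var = Pi (Xp enc dec chi (removeAll x (fv M))) (S A Var) (S M (supd Var x (Var (Xp enc dec chi (removeAll x (fv M))))))"
  by (simp only: sact.simps Let_def Xs_Var)

lemma ren_twice: "y \<notin> set (removeAll x (fv M)) \<Longrightarrow> S (S M (supd Var x (Var y))) (supd Var y N) = S M (supd Var x N)"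
  unfolding sact_comp by (rule sact_cong) (auto simp: supd_def)

lemma rem_usubst: "y \<notin> set (removeAll x (fv M)) \<Longrightarrow> removeAll y (fv (S M (supd Var x (Var y)))) = removeAll x (fv M)"
  unfolding fv_sact by (subst rem_concat) (auto simp: concat_Var)

lemma usubst_self: "S (S M (supd Var x (Var y))) (supd Var y (Var y)) = S M (supd Var x (Var y))"
  unfolding sact_comp by (rule sact_cong) (auto simp: supd_def)

lemma alpha_iota: "alpha enc dec chi M (S M Var)"
proof (induction M)
  case (Lam x A M)
  let ?u = "Xp enc dec chi (removeAll x (fv M))"
  show ?case unfolding iota_Lam
    using Xp_fresh[of "removeAll x (fv M)"] by (intro a_lam[where y = ?u]) (auto simp: Lam.IH usubst_def usubst_self)
next
  case (Pi x A M)
  let ?u = "Xp enc dec chi (removeAll x (fv M))"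
  show ?case unfolding iota_Pi
    using Xp_fresh[of "removeAll x (fv M)"] by (intro a_pi[where y = ?u]) (auto simp: Pi.IH usubst_def usubst_self)
qed (auto intro: alpha.intros)

lemma alpha_imp_iota: "alpha enc dec chi M N \<Longrightarrow> S M Var = S N Var"
proof (induction rule: alpha.induct)
  case (a_lam A A' y x M x' M')
  have r: "removeAll x (fv M) = removeAll x' (fv M')"
    using a_lam.hyps rem_usubst unfolding usubst_def by metis
  show ?case unfolding iota_Lam r a_lam.IH
    using a_lam.hyps ren_twice unfolding usubst_def by metis
next
  case (a_pi A A' y x M x' M')
  have r: "removeAll x (fv M) = removeAll x' (fv M')"
    using a_pi.hyps rem_usubst unfolding usubst_def by metis
  show ?case unfolding iota_Pi r a_pi.IH
    using a_pi.hyps ren_twice unfolding usubst_def by metis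
qed simp_all

lemma iota_betaconv: "S M Var = S N Var \<Longrightarrow> betaconv enc dec chi M N"
proof -
  assume e: "S M Var = S N Var"
  have "equivclp (sup (alpha enc dec chi) (beta enc dec chi)) M (S M Var)"
    using alpha_iota by blast
  moreover have "equivclp (sup (alpha enc dec chi) (beta enc dec chi)) (S N Var) N"
    using alpha_iota[of N] by blast
  ultimately show ?thesis unfolding betaconv_def e by (rule equivclp_trans)
qed

lemma beta_fv: "beta enc dec chi M N \<Longrightarrow> set (fv N) \<subseteq> set (fv M)"
proof (induction rule: beta.induct)
  case (b_contr x A M N)
  show ?case unfolding usubst_def set_fv_sact by (auto simp: supd_def split: if_splits)
qed auto

lemma iota_sact: "S (S M \<sigma>) Var = S M (\<lambda>w. S (\<sigma> w) Var)"
  by (rule sact_comp)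

lemma fresh_subst_Var: "y \<notin> set (fv K) \<Longrightarrow> S K (supd Var y N) = S K Var"
  by (rule sact_cong) (auto simp: supd_def)

lemma beta_subst_Lam_body:
  assumes fvs: "set (fv M') \<subseteq> set (fv M)"
    and IH: "\<And>\<sigma>. \<exists>P. beta enc dec chi (S M \<sigma>) P \<and> S P Var = S (S M' \<sigma>) Var"
  shows "\<exists>P. beta enc dec chi (S (Lam x A M) \<sigma>) P \<and> S P Var = S (S (Lam x A M') \<sigma>) Var"
    and "\<exists>P. beta enc dec chi (S (Pi x A M) \<sigma>) P \<and> S P Var = S (S (Pi x A M') \<sigma>) Var"
proof -
  define x1 where "x1 = Xs enc dec chi \<sigma> (removeAll x (fv M))"
  obtain P0 where P0: "beta enc dec chi (S M (supd \<sigma> x (Var x1))) P0"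
      "S P0 Var = S (S M' (supd \<sigma> x (Var x1))) Var" using IH by blast
  have fr: "x1 \<notin> set (fv (\<sigma> w))" if "w \<in> set (removeAll x (fv M'))" for w
    unfolding x1_def using that fvs by (intro Xs_fresh) auto
  have f: "fv P0 = concat (map (\<lambda>y. fv (supd \<sigma> x (Var x1) y)) (fv M'))" by (metis fv_iota P0(2) fv_sact)
  have "removeAll x1 (concat (map (\<lambda>y. fv (supd \<sigma> x (Var x1) y)) (fv M'))) = concat (map (\<lambda>w. fv (\<sigma> w)) (removeAll x (fv M')))"
    using fr by (intro rem_concat) auto
  then have rP0: "removeAll x1 (fv P0) = concat (map (\<lambda>w. fv (\<sigma> w)) (removeAll x (fv M')))"
    by (simp only: f)
  define u where "u = Xp enc dec chi (removeAll x1 (fv P0))"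
  have u': "Xs enc dec chi (\<lambda>w. S (\<sigma> w) Var) (removeAll x (fv M')) = u"
    unfolding u_def rP0 Xs_def fv_iota ..
  have body: "S P0 (supd Var x1 (Var u)) = S M' (supd (\<lambda>w. S (\<sigma> w) Var) x (Var u))"
  proof -
    have "S P0 (supd Var x1 (Var u)) = S (S P0 Var) (supd Var x1 (Var u))" by (simp only: sact_Var_comp)
    also have "\<dots> = S (S M' (supd \<sigma> x (Var x1))) (supd Var x1 (Var u))" by (simp only: P0(2) sact_Var_comp)
    also have "\<dots> = S M' (supd (\<lambda>w. S (\<sigma> w) Var) x (Var u))"
      unfolding sact_comp
    proof (rule sact_cong)
      fix w assume w: "w \<in> set (fv M')"
      show "S (supd \<sigma> x (Var x1) w) (supd Var x1 (Var u)) = supd (\<lambda>w. S (\<sigma> w) Var) x (Var u) w"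
      proof (cases "w = x")
        case False
        then have "x1 \<notin> set (fv (\<sigma> w))" using fr w by simp
        then have "S (\<sigma> w) (supd Var x1 (Var u)) = S (\<sigma> w) Var" by (rule fresh_subst_Var)
        then show ?thesis using False by (simp add: supd_def)
      qed (simp add: supd_def)
    qed
    finally show ?thesis .
  qed
  show "\<exists>P. beta enc dec chi (S (Lam x A M) \<sigma>) P \<and> S P Var = S (S (Lam x A M') \<sigma>) Var"
  proof (intro exI conjI)
    show "beta enc dec chi (S (Lam x A M) \<sigma>) (Lam x1 (S A \<sigma>) P0)"
      unfolding x1_def by (simp only: sact.simps Let_def) (rule b_lam_body, rule P0(1)[unfolded x1_def])
    show "S (Lam x1 (S A \<sigma>) P0) Var = S (S (Lam x A M') \<sigma>) Var"
      unfolding iota_sact by (simp only: sact.simps Let_def Xs_Var u' body u_def[symmetric] iota_sact)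
  qed
  show "\<exists>P. beta enc dec chi (S (Pi x A M) \<sigma>) P \<and> S P Var = S (S (Pi x A M') \<sigma>) Var"
  proof (intro exI conjI)
    show "beta enc dec chi (S (Pi x A M) \<sigma>) (Pi x1 (S A \<sigma>) P0)"
      unfolding x1_def by (simp only: sact.simps Let_def) (rule b_pi_body, rule P0(1)[unfolded x1_def])
    show "S (Pi x1 (S A \<sigma>) P0) Var = S (S (Pi x A M') \<sigma>) Var"
      unfolding iota_sact by (simp only: sact.simps Let_def Xs_Var u' body u_def[symmetric] iota_sact)
  qed
qed

lemma beta_subst: "beta enc dec chi M N \<Longrightarrow> \<exists>P. beta enc dec chi (S M \<sigma>) P \<and> S P Var = S (S N \<sigma>) Var"
proof (induction arbitrary: \<sigma> rule: beta.induct)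
  case (b_contr x A M N)
  define x1 where "x1 = Xs enc dec chi \<sigma> (removeAll x (fv M))"
  let ?P = "usubst enc dec chi (S M (supd \<sigma> x (Var x1))) x1 (S N \<sigma>)"
  have l: "S (App (Lam x A M) N) \<sigma> = App (Lam x1 (S A \<sigma>) (S M (supd \<sigma> x (Var x1)))) (S N \<sigma>)"
    unfolding x1_def by (simp only: sact.simps Let_def)
  have "S ?P Var = S M (\<lambda>w. S (S (supd \<sigma> x (Var x1) w) (supd Var x1 (S N \<sigma>))) Var)"
    by (simp only: usubst_def sact_comp)
  also have "\<dots> = S M (\<lambda>w. S (S (supd Var x N w) \<sigma>) Var)"
  proof (rule sact_cong)
    fix w assume w: "w \<in> set (fv M)"
    show "S (S (supd \<sigma> x (Var x1) w) (supd Var x1 (S N \<sigma>))) Var = S (S (supd Var x N w) \<sigma>) Var"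
    proof (cases "w = x")
      case False
      then have "x1 \<notin> set (fv (\<sigma> w))" unfolding x1_def using w by (intro Xs_fresh) simp
      then have "S (\<sigma> w) (supd Var x1 (S N \<sigma>)) = S (\<sigma> w) Var" by (rule fresh_subst_Var)
      then show ?thesis using False by (simp add: supd_def iota_idem)
    qed (simp add: supd_def)
  qed
  also have "\<dots> = S (S (usubst enc dec chi M x N) \<sigma>) Var"
    by (simp only: usubst_def sact_comp)
  finally have e: "S ?P Var = S (S (usubst enc dec chi M x N) \<sigma>) Var" .
  show ?case unfolding l by (rule exI[of _ ?P], rule conjI, rule beta.b_contr, rule e)
next
  case (b_lam_body M M' x A)
  show ?case by (rule beta_subst_Lam_body(1)[OF beta_fv[OF b_lam_body.hyps] b_lam_body.IH])
next
  case (b_pi_body M M' x A)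
  show ?case by (rule beta_subst_Lam_body(2)[OF beta_fv[OF b_pi_body.hyps] b_pi_body.IH])
next
  case (b_lam_ty A A' x M)
  obtain P0 where P0: "beta enc dec chi (S A \<sigma>) P0" "S P0 Var = S (S A' \<sigma>) Var" using b_lam_ty.IH by blast
  define x1 where "x1 = Xs enc dec chi \<sigma> (removeAll x (fv M))"
  have l: "S (Lam x A M) \<sigma> = Lam x1 (S A \<sigma>) (S M (supd \<sigma> x (Var x1)))"
    "S (Lam x A' M) \<sigma> = Lam x1 (S A' \<sigma>) (S M (supd \<sigma> x (Var x1)))"
    unfolding x1_def by (simp_all only: sact.simps Let_def)
  have e: "S (Lam x1 P0 (S M (supd \<sigma> x (Var x1)))) Var = S (Lam x1 (S A' \<sigma>) (S M (supd \<sigma> x (Var x1)))) Var"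
    by (simp only: sact.simps Let_def P0(2))
  show ?case unfolding l by (rule exI, rule conjI, rule beta.b_lam_ty, rule P0(1), rule e)
next
  case (b_pi_ty A A' x M)
  obtain P0 where P0: "beta enc dec chi (S A \<sigma>) P0" "S P0 Var = S (S A' \<sigma>) Var" using b_pi_ty.IH by blast
  define x1 where "x1 = Xs enc dec chi \<sigma> (removeAll x (fv M))"
  have l: "S (Pi x A M) \<sigma> = Pi x1 (S A \<sigma>) (S M (supd \<sigma> x (Var x1)))"
    "S (Pi x A' M) \<sigma> = Pi x1 (S A' \<sigma>) (S M (supd \<sigma> x (Var x1)))"
    unfolding x1_def by (simp_all only: sact.simps Let_def)
  have e: "S (Pi x1 P0 (S M (supd \<sigma> x (Var x1)))) Var = S (Pi x1 (S A' \<sigma>) (S M (supd \<sigma> x (Var x1)))) Var"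
    by (simp only: sact.simps Let_def P0(2))
  show ?case unfolding l by (rule exI, rule conjI, rule beta.b_pi_ty, rule P0(1), rule e)
next
  case (b_app_l M N P)
  obtain P0 where P0: "beta enc dec chi (S M \<sigma>) P0" "S P0 Var = S (S N \<sigma>) Var" using b_app_l.IH by blast
  have e: "S (App P0 (S P \<sigma>)) Var = S (App (S N \<sigma>) (S P \<sigma>)) Var" by (simp only: sact.simps P0(2))
  have l: "S (App M P) \<sigma> = App (S M \<sigma>) (S P \<sigma>)" "S (App N P) \<sigma> = App (S N \<sigma>) (S P \<sigma>)" by simp_all
  show ?case unfolding l by (rule exI, rule conjI, rule beta.b_app_l, rule P0(1), rule e)
next
  case (b_app_r M N P)
  obtain P0 where P0: "beta enc dec chi (S M \<sigma>) P0" "S P0 Var = S (S N \<sigma>) Var" using b_app_r.IH by blast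
  have e: "S (App (S P \<sigma>) P0) Var = S (App (S P \<sigma>) (S N \<sigma>)) Var" by (simp only: sact.simps P0(2))
  have l: "S (App P M) \<sigma> = App (S P \<sigma>) (S M \<sigma>)" "S (App P N) \<sigma> = App (S P \<sigma>) (S N \<sigma>)" by simp_all
  show ?case unfolding l by (rule exI, rule conjI, rule beta.b_app_r, rule P0(1), rule e)
qed

lemma step_subst:
  assumes "sup (alpha enc dec chi) (beta enc dec chi) b c"
  shows "betaconv enc dec chi (S b \<sigma>) (S c \<sigma>)"
  using assms
proof
  assume "alpha enc dec chi b c"
  then have "S b \<sigma> = S c \<sigma>" using alpha_imp_iota iota_eq_subst by blast
  then show ?thesis unfolding betaconv_def by simp
next
  assume "beta enc dec chi b c"
  then obtain P where P: "beta enc dec chi (S b \<sigma>) P" "S P Var = S (S c \<sigma>) Var" using beta_subst by blast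
  have "betaconv enc dec chi (S b \<sigma>) P" using P(1) unfolding betaconv_def by blast
  moreover have "betaconv enc dec chi P (S c \<sigma>)" using P(2) by (rule iota_betaconv)
  ultimately show ?thesis unfolding betaconv_def by (rule equivclp_trans)
qed

lemma betaconv_subst: "betaconv enc dec chi A B \<Longrightarrow> betaconv enc dec chi (S A \<sigma>) (S B \<sigma>)"
  unfolding betaconv_def
proof (induction rule: equivclp_induct)
  case base then show ?case by simp
next
  case (step b c)
  from step.hyps(2) have "betaconv enc dec chi (S b \<sigma>) (S c \<sigma>)"
    by (metis step_subst betaconv_def equivclp_sym)
  then show ?case using step.IH unfolding betaconv_def by (metis equivclp_trans)
qed

end

lemmas T_sort = t_sort and T_var = t_var and T_prod = t_prod and T_abs = t_abs
  and T_app = t_app and T_conv = t_conv and Ok_cons = ok_cons and Ok_nil = ok_nil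

locale pts2 = pts enc dec chi
  for enc :: "'v \<Rightarrow> nat" and dec :: "nat \<Rightarrow> 'v" and chi :: "nat list \<Rightarrow> nat" +
  fixes Ax :: "'c \<Rightarrow> 'c \<Rightarrow> bool" and Rl :: "'c \<Rightarrow> 'c \<Rightarrow> 'c \<Rightarrow> bool"
begin

abbreviation HT :: "('c, 'v) ctx \<Rightarrow> ('c, 'v) trm \<Rightarrow> ('c, 'v) trm \<Rightarrow> bool" where
  "HT \<Gamma> M A \<equiv> has_type enc dec chi Ax Rl \<Gamma> M A"
abbreviation OK :: "('c, 'v) ctx \<Rightarrow> bool" where
  "OK \<Gamma> \<equiv> ctx_ok enc dec chi Ax Rl \<Gamma>"
abbreviation I :: "('c, 'v) trm \<Rightarrow> ('c, 'v) trm" where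
  "I M \<equiv> S M Var"

lemma typ_ok: "OK \<Gamma> \<Longrightarrow> True" "HT \<Gamma> M A \<Longrightarrow> OK \<Gamma>"
  by (induct rule: ctx_ok_has_type.inducts) auto

lemma weaken_aux: "OK \<Gamma> \<Longrightarrow> True"
  "HT \<Gamma> M A \<Longrightarrow> \<forall>\<Gamma>'. OK \<Gamma>' \<longrightarrow> set \<Gamma> \<subseteq> set \<Gamma>' \<longrightarrow> HT \<Gamma>' M A"
proof (induct rule: ctx_ok_has_type.inducts)
  case (t_sort \<Gamma> s1 s2) then show ?case by (auto intro: ctx_ok_has_type.intros)
next
  case (t_var \<Gamma> x A) then show ?case by (auto intro: ctx_ok_has_type.intros)
next
  case (t_prod s1 s2 s3 \<Gamma> A B x)
  show ?case
  proof (intro allI impI)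
    fix \<Gamma>' assume ok: "OK \<Gamma>'" and sub: "set \<Gamma> \<subseteq> set \<Gamma>'"
    have A: "HT \<Gamma>' A (Cst s1)" using t_prod ok sub by blast
    show "HT \<Gamma>' (Pi x A B) (Cst s3)"
    proof (rule T_prod[OF t_prod(1) A], intro allI impI)
      fix y assume y: "y \<notin> set (map fst \<Gamma>')"
      then have y': "y \<notin> set (map fst \<Gamma>)" using sub by force
      have okc: "OK ((y, A) # \<Gamma>')" using ok A y by (rule Ok_cons)
      have IH: "\<forall>\<Gamma>''. OK \<Gamma>'' \<longrightarrow> set ((y, A) # \<Gamma>) \<subseteq> set \<Gamma>'' \<longrightarrow> HT \<Gamma>'' (usubst enc dec chi B x (Var y)) (Cst s2)"
        using t_prod(4) y' by blast
      show "HT ((y, A) # \<Gamma>') (usubst enc dec chi B x (Var y)) (Cst s2)"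
        by (rule IH[rule_format, OF okc]) (use sub in auto)
    qed
  qed
next
  case (t_abs s1 s2 s3 \<Gamma> A B y M x)
  show ?case
  proof (intro allI impI)
    fix \<Gamma>' assume ok: "OK \<Gamma>'" and sub: "set \<Gamma> \<subseteq> set \<Gamma>'"
    have A: "HT \<Gamma>' A (Cst s1)" using t_abs ok sub by blast
    show "HT \<Gamma>' (Lam x A M) (Pi y A B)"
    proof (rule T_abs[OF t_abs(1) A]; intro allI impI)
      fix z assume z: "z \<notin> set (map fst \<Gamma>')"
      then have z': "z \<notin> set (map fst \<Gamma>)" using sub by force
      have okz: "OK ((z, A) # \<Gamma>')" using ok A z by (rule Ok_cons)
      have sub': "set ((z, A) # \<Gamma>) \<subseteq> set ((z, A) # \<Gamma>')" using sub by auto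
      have IH1: "\<forall>\<Gamma>''. OK \<Gamma>'' \<longrightarrow> set ((z, A) # \<Gamma>) \<subseteq> set \<Gamma>'' \<longrightarrow> HT \<Gamma>'' (usubst enc dec chi B y (Var z)) (Cst s2)"
        using t_abs(4) z' by blast
      have IH2: "\<forall>\<Gamma>''. OK \<Gamma>'' \<longrightarrow> set ((z, A) # \<Gamma>) \<subseteq> set \<Gamma>'' \<longrightarrow> HT \<Gamma>'' (usubst enc dec chi M x (Var z)) (usubst enc dec chi B y (Var z))"
        using t_abs(5) z' by blast
      show "HT ((z, A) # \<Gamma>') (usubst enc dec chi B y (Var z)) (Cst s2)"
        by (rule IH1[rule_format, OF okz sub'])
      show "HT ((z, A) # \<Gamma>') (usubst enc dec chi M x (Var z)) (usubst enc dec chi B y (Var z))"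
        by (rule IH2[rule_format, OF okz sub'])
    qed
  qed
next
  case (t_app \<Gamma> M x A B N s) then show ?case by (blast intro: T_app)
next
  case (t_conv \<Gamma> M A B s) then show ?case by (blast intro: T_conv)
qed auto

lemma weaken: "HT \<Gamma> M A \<Longrightarrow> OK \<Gamma>' \<Longrightarrow> set \<Gamma> \<subseteq> set \<Gamma>' \<Longrightarrow> HT \<Gamma>' M A"
  using weaken_aux(2) by blast

lemma weaken_cons: "HT \<Gamma> M A \<Longrightarrow> OK ((z, B) # \<Gamma>) \<Longrightarrow> HT ((z, B) # \<Gamma>) M A"
  by (erule weaken) auto

lemma ok_entries: "OK \<Gamma> \<Longrightarrow> \<forall>x D. (x, D) \<in> set \<Gamma> \<longrightarrow> (\<exists>s. HT \<Gamma> D (Cst s))"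
  "HT \<Gamma> M A \<Longrightarrow> True"
proof (induct rule: ctx_ok_has_type.inducts)
  case (ok_cons \<Gamma> A s x)
  have ok: "OK ((x, A) # \<Gamma>)" using ok_cons by (blast intro: ctx_ok_has_type.intros)
  show ?case using ok_cons weaken_cons[OF _ ok] by fastforce
qed auto

lemma fresh_list: "\<exists>y. y \<notin> set (L :: 'v list)"
  by (rule exI[of _ "Xp enc dec chi L"], rule Xp_fresh)

lemma fv_typ: "OK \<Gamma> \<Longrightarrow> True" "HT \<Gamma> M A \<Longrightarrow> set (fv M) \<subseteq> set (map fst \<Gamma>)"
proof (induct rule: ctx_ok_has_type.inducts)
  case (t_var \<Gamma> x A) then show ?case by force
next
  case (t_prod s1 s2 s3 \<Gamma> A B x)
  obtain y where y: "y \<notin> set (map fst \<Gamma> @ fv B)" using fresh_list by blast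
  then have "set (fv (usubst enc dec chi B x (Var y))) \<subseteq> set (map fst ((y, A) # \<Gamma>))" using t_prod by auto
  then have "set (fv B) - {x} \<subseteq> set (map fst \<Gamma>)"
    using y unfolding usubst_def set_fv_sact by (force simp: supd_def)
  then show ?case using t_prod by auto
next
  case (t_abs s1 s2 s3 \<Gamma> A B y M x)
  obtain z where z: "z \<notin> set (map fst \<Gamma> @ fv M)" using fresh_list by blast
  then have "set (fv (usubst enc dec chi M x (Var z))) \<subseteq> set (map fst ((z, A) # \<Gamma>))" using t_abs by auto
  then have "set (fv M) - {x} \<subseteq> set (map fst \<Gamma>)"
    using z unfolding usubst_def set_fv_sact by (force simp: supd_def)
  then show ?case using t_abs by auto
qed auto

lemma ok_fv: "OK \<Gamma> \<Longrightarrow> (x, D) \<in> set \<Gamma> \<Longrightarrow> set (fv D) \<subseteq> set (map fst \<Gamma>)"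
  using ok_entries(1) fv_typ(2) by blast

definition ctxeq :: "('c, 'v) ctx \<Rightarrow> ('c, 'v) ctx \<Rightarrow> bool" where
  "ctxeq \<Gamma> \<Gamma>' = list_all2 (\<lambda>(x, A) (x', A'). x = x' \<and> I A = I A') \<Gamma> \<Gamma>'"

lemma ctxeq_refl: "ctxeq \<Gamma> \<Gamma>"
  unfolding ctxeq_def by (induction \<Gamma>) auto

lemma ctxeq_Nil: "ctxeq [] \<Gamma>' \<longleftrightarrow> \<Gamma>' = []"
  unfolding ctxeq_def by auto

lemma ctxeq_Cons: "ctxeq ((x, A) # \<Gamma>) \<Gamma>'' \<longleftrightarrow> (\<exists>A' \<Gamma>'. \<Gamma>'' = (x, A') # \<Gamma>' \<and> I A = I A' \<and> ctxeq \<Gamma> \<Gamma>')"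
  unfolding ctxeq_def by (cases \<Gamma>'') auto

lemma ctxeq_cons: "I A = I A' \<Longrightarrow> ctxeq \<Gamma> \<Gamma>' \<Longrightarrow> ctxeq ((x, A) # \<Gamma>) ((x, A') # \<Gamma>')"
  unfolding ctxeq_def by auto

lemma ctxeq_dom: "ctxeq \<Gamma> \<Gamma>' \<Longrightarrow> map fst \<Gamma> = map fst \<Gamma>'"
  unfolding ctxeq_def by (induction rule: list_all2_induct) auto

lemma ctxeq_mem: "ctxeq \<Gamma> \<Gamma>' \<Longrightarrow> (x, A) \<in> set \<Gamma> \<Longrightarrow> \<exists>A'. (x, A') \<in> set \<Gamma>' \<and> I A' = I A"
  unfolding ctxeq_def by (induction rule: list_all2_induct) auto

lemma I_Cst: "I M = Cst k \<Longrightarrow> M = Cst k"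
  by (cases M) (auto simp: Let_def)

lemma I_Var: "I M = Var x \<Longrightarrow> M = Var x"
  by (cases M) (auto simp: Let_def)

lemma I_App: "I M' = I (App M N) \<Longrightarrow> \<exists>M1 N1. M' = App M1 N1 \<and> I M1 = I M \<and> I N1 = I N"
  by (cases M') (auto simp: Let_def)

lemma I_Pi: "I M' = I (Pi x A B) \<Longrightarrow>
  \<exists>x' A' B'. M' = Pi x' A' B' \<and> I A' = I A \<and> (\<forall>z. usubst enc dec chi B' x' (Var z) = usubst enc dec chi B x (Var z))"
proof (cases M')
  case (Pi x' A' B')
  assume e: "I M' = I (Pi x A B)"
  let ?u = "Xp enc dec chi (removeAll x (fv B))"
  have c: "Xp enc dec chi (removeAll x' (fv B')) = ?u \<and> I A' = I A \<and>
     S B' (supd Var x' (Var (Xp enc dec chi (removeAll x' (fv B'))))) = S B (supd Var x (Var ?u))"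
    using e unfolding Pi iota_Pi trm.inject .
  then have e2: "Xp enc dec chi (removeAll x' (fv B')) = ?u" "I A' = I A"
     "S B' (supd Var x' (Var ?u)) = S B (supd Var x (Var ?u))" by (argo, argo, metis)
  have f1: "?u \<notin> set (removeAll x (fv B))" by (rule Xp_fresh)
  have f2: "?u \<notin> set (removeAll x' (fv B'))" using Xp_fresh e2(1) by metis
  have "usubst enc dec chi B' x' (Var z) = usubst enc dec chi B x (Var z)" for z
  proof -
    have "usubst enc dec chi B' x' (Var z) = S (S B' (supd Var x' (Var ?u))) (supd Var ?u (Var z))"
      unfolding usubst_def using ren_twice[OF f2] by simp
    also have "\<dots> = S (S B (supd Var x (Var ?u))) (supd Var ?u (Var z))" by (simp only: e2(3))
    also have "\<dots> = usubst enc dec chi B x (Var z)"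
      unfolding usubst_def using ren_twice[OF f1] by simp
    finally show ?thesis .
  qed
  then show ?thesis using Pi e2(2) by blast
qed (auto simp: Let_def)

lemma I_Lam: "I M' = I (Lam x A B) \<Longrightarrow>
  \<exists>x' A' B'. M' = Lam x' A' B' \<and> I A' = I A \<and> (\<forall>z. usubst enc dec chi B' x' (Var z) = usubst enc dec chi B x (Var z))"
proof (cases M')
  case (Lam x' A' B')
  assume e: "I M' = I (Lam x A B)"
  let ?u = "Xp enc dec chi (removeAll x (fv B))"
  have c: "Xp enc dec chi (removeAll x' (fv B')) = ?u \<and> I A' = I A \<and>
     S B' (supd Var x' (Var (Xp enc dec chi (removeAll x' (fv B'))))) = S B (supd Var x (Var ?u))"
    using e unfolding Lam iota_Lam trm.inject .
  then have e2: "Xp enc dec chi (removeAll x' (fv B')) = ?u" "I A' = I A"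
     "S B' (supd Var x' (Var ?u)) = S B (supd Var x (Var ?u))" by (argo, argo, metis)
  have f1: "?u \<notin> set (removeAll x (fv B))" by (rule Xp_fresh)
  have f2: "?u \<notin> set (removeAll x' (fv B'))" using Xp_fresh e2(1) by metis
  have "usubst enc dec chi B' x' (Var z) = usubst enc dec chi B x (Var z)" for z
  proof -
    have "usubst enc dec chi B' x' (Var z) = S (S B' (supd Var x' (Var ?u))) (supd Var ?u (Var z))"
      unfolding usubst_def using ren_twice[OF f2] by simp
    also have "\<dots> = S (S B (supd Var x (Var ?u))) (supd Var ?u (Var z))" by (simp only: e2(3))
    also have "\<dots> = usubst enc dec chi B x (Var z)"
      unfolding usubst_def using ren_twice[OF f1] by simp
    finally show ?thesis .
  qed
  then show ?thesis using Lam e2(2) by blast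
qed (auto simp: Let_def)

lemma I_Pi_eq: "I A = I A' \<Longrightarrow> I (Pi y A B) = I (Pi y A' B)"
  by (simp add: Let_def)

lemma I_usubst: "I N = I N' \<Longrightarrow> I (usubst enc dec chi B x N) = I (usubst enc dec chi B x N')"
  unfolding usubst_def sact_comp by (rule sact_cong) (simp add: supd_def)

lemma bc_trans: "betaconv enc dec chi A B \<Longrightarrow> betaconv enc dec chi B C \<Longrightarrow> betaconv enc dec chi A C"
  unfolding betaconv_def by (rule equivclp_trans)

lemma AI_aux:
  "OK \<Gamma> \<Longrightarrow> \<forall>\<Gamma>'. ctxeq \<Gamma> \<Gamma>' \<longrightarrow> OK \<Gamma>' \<and> (\<forall>x D D'. (x, D) \<in> set \<Gamma> \<longrightarrow> I D' = I D \<longrightarrow> (\<exists>s. HT \<Gamma>' D' (Cst s)))"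
  "HT \<Gamma> M A \<Longrightarrow> \<forall>\<Gamma>' M' A'. ctxeq \<Gamma> \<Gamma>' \<longrightarrow> I M' = I M \<longrightarrow> I A' = I A \<longrightarrow> HT \<Gamma>' M' A'"
proof (induct rule: ctx_ok_has_type.inducts)
  case ok_nil
  then show ?case by (auto simp: ctxeq_Nil intro: Ok_nil)
next
  case (ok_cons \<Gamma> A s x)
  show ?case
  proof (intro allI impI)
    fix \<Gamma>'' assume "ctxeq ((x, A) # \<Gamma>) \<Gamma>''"
    then obtain A' \<Gamma>' where G: "\<Gamma>'' = (x, A') # \<Gamma>'" "I A = I A'" "ctxeq \<Gamma> \<Gamma>'"
      unfolding ctxeq_Cons by blast
    have okG: "OK \<Gamma>'" using ok_cons(2) G(3) by blast
    have ent: "\<forall>y D D'. (y, D) \<in> set \<Gamma> \<longrightarrow> I D' = I D \<longrightarrow> (\<exists>s. HT \<Gamma>' D' (Cst s))" using ok_cons(2) G(3) by blast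
    have IHA: "\<And>D'. I D' = I A \<Longrightarrow> HT \<Gamma>' D' (Cst s)" using ok_cons(4) G(3) by blast
    have A': "HT \<Gamma>' A' (Cst s)" using IHA G(2) by simp
    have xd: "x \<notin> set (map fst \<Gamma>')" using ok_cons(5) ctxeq_dom[OF G(3)] by simp
    have ok2: "OK ((x, A') # \<Gamma>')" by (rule Ok_cons[OF okG A' xd])
    have "\<exists>s. HT ((x, A') # \<Gamma>') D' (Cst s)" if "(y, D) \<in> set ((x, A) # \<Gamma>)" "I D' = I D" for y D D'
    proof (cases "(y, D) = (x, A)")
      case True
      then show ?thesis using IHA that(2) weaken_cons[OF _ ok2] by blast
    next
      case False
      then have "(y, D) \<in> set \<Gamma>" using that(1) by auto
      then show ?thesis using ent that(2) weaken_cons[OF _ ok2] by blast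
    qed
    then show "OK \<Gamma>'' \<and> (\<forall>y D D'. (y, D) \<in> set ((x, A) # \<Gamma>) \<longrightarrow> I D' = I D \<longrightarrow> (\<exists>s. HT \<Gamma>'' D' (Cst s)))"
      using ok2 G(1) by blast
  qed
next
  case (t_sort \<Gamma> s1 s2)
  show ?case
  proof (intro allI impI)
    fix \<Gamma>' M' A' assume a: "ctxeq \<Gamma> \<Gamma>'" "I M' = I (Cst s1)" "I A' = I (Cst s2)"
    then have "M' = Cst s1" "A' = Cst s2" using I_Cst by auto
    moreover have "OK \<Gamma>'" using t_sort(2) a(1) by blast
    ultimately show "HT \<Gamma>' M' A'" using t_sort(3) by (simp add: T_sort)
  qed
next
  case (t_var \<Gamma> x A)
  show ?case
  proof (intro allI impI)
    fix \<Gamma>' M' A' assume a: "ctxeq \<Gamma> \<Gamma>'" "I M' = I (Var x)" "I A' = I A"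
    then have M': "M' = Var x" using I_Var by auto
    obtain A'' where A'': "(x, A'') \<in> set \<Gamma>'" "I A'' = I A" using ctxeq_mem[OF a(1) t_var(3)] by blast
    have okG: "OK \<Gamma>'" using t_var(2) a(1) by blast
    have "\<exists>s. HT \<Gamma>' A' (Cst s)" using t_var(2) a(1) a(3) t_var(3) by blast
    then obtain s where s: "HT \<Gamma>' A' (Cst s)" by blast
    have bc: "betaconv enc dec chi A'' A'" using A''(2) a(3) by (intro iota_betaconv) simp
    show "HT \<Gamma>' M' A'" unfolding M' by (rule T_conv[OF T_var[OF okG A''(1)] bc s])
  qed
next
  case (t_prod s1 s2 s3 \<Gamma> A B x)
  show ?case
  proof (intro allI impI)
    fix \<Gamma>' M' A' assume a: "ctxeq \<Gamma> \<Gamma>'" "I M' = I (Pi x A B)" "I A' = I (Cst s3)"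
    obtain x' A1 B1 where M': "M' = Pi x' A1 B1" "I A1 = I A"
      "\<And>z. usubst enc dec chi B1 x' (Var z) = usubst enc dec chi B x (Var z)" using I_Pi[OF a(2)] by blast
    have A': "A' = Cst s3" using a(3) I_Cst by auto
    have hA: "HT \<Gamma>' A1 (Cst s1)" using t_prod(3) a(1) M'(2) by simp
    have "HT \<Gamma>' (Pi x' A1 B1) (Cst s3)"
    proof (rule T_prod[OF t_prod(1) hA], intro allI impI)
      fix z assume z: "z \<notin> set (map fst \<Gamma>')"
      then have z': "z \<notin> set (map fst \<Gamma>)" using ctxeq_dom[OF a(1)] by simp
      have ce: "ctxeq ((z, A) # \<Gamma>) ((z, A1) # \<Gamma>')" using M'(2) a(1) by (intro ctxeq_cons) simp_all
      have "\<forall>\<Gamma>' M' A'. ctxeq ((z, A) # \<Gamma>) \<Gamma>' \<longrightarrow> I M' = I (usubst enc dec chi B x (Var z)) \<longrightarrow> I A' = I (Cst s2) \<longrightarrow> HT \<Gamma>' M' A'"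
        using t_prod(4) z' by blast
      then show "HT ((z, A1) # \<Gamma>') (usubst enc dec chi B1 x' (Var z)) (Cst s2)"
        using ce M'(3) by simp
    qed
    then show "HT \<Gamma>' M' A'" using M'(1) A' by simp
  qed
next
  case (t_abs s1 s2 s3 \<Gamma> A B y M x)
  show ?case
  proof (intro allI impI)
    fix \<Gamma>' M' A' assume a: "ctxeq \<Gamma> \<Gamma>'" "I M' = I (Lam x A M)" "I A' = I (Pi y A B)"
    obtain x' A1 M1 where M': "M' = Lam x' A1 M1" "I A1 = I A"
      "\<And>z. usubst enc dec chi M1 x' (Var z) = usubst enc dec chi M x (Var z)" using I_Lam[OF a(2)] by blast
    obtain y' A2 B2 where A': "A' = Pi y' A2 B2" "I A2 = I A"
      "\<And>z. usubst enc dec chi B2 y' (Var z) = usubst enc dec chi B y (Var z)" using I_Pi[OF a(3)] by blast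
    have hA: "\<And>A0. I A0 = I A \<Longrightarrow> HT \<Gamma>' A0 (Cst s1)" using t_abs(3) a(1) by simp
    have hB: "\<And>A0 z. I A0 = I A \<Longrightarrow> z \<notin> set (map fst \<Gamma>') \<Longrightarrow> HT ((z, A0) # \<Gamma>') (usubst enc dec chi B2 y' (Var z)) (Cst s2)"
    proof -
      fix A0 z assume A0: "I A0 = I A" and z: "z \<notin> set (map fst \<Gamma>')"
      then have z': "z \<notin> set (map fst \<Gamma>)" using ctxeq_dom[OF a(1)] by simp
      have ce: "ctxeq ((z, A) # \<Gamma>) ((z, A0) # \<Gamma>')" using A0 a(1) by (intro ctxeq_cons) simp_all
      have "\<forall>\<Gamma>' M' A'. ctxeq ((z, A) # \<Gamma>) \<Gamma>' \<longrightarrow> I M' = I (usubst enc dec chi B y (Var z)) \<longrightarrow> I A' = I (Cst s2) \<longrightarrow> HT \<Gamma>' M' A'"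
        using t_abs(4) z' by blast
      then show "HT ((z, A0) # \<Gamma>') (usubst enc dec chi B2 y' (Var z)) (Cst s2)"
        using ce A'(3) by simp
    qed
    have hM: "\<And>z. z \<notin> set (map fst \<Gamma>') \<Longrightarrow> HT ((z, A1) # \<Gamma>') (usubst enc dec chi M1 x' (Var z)) (usubst enc dec chi B2 y' (Var z))"
    proof -
      fix z assume z: "z \<notin> set (map fst \<Gamma>')"
      then have z': "z \<notin> set (map fst \<Gamma>)" using ctxeq_dom[OF a(1)] by simp
      have ce: "ctxeq ((z, A) # \<Gamma>) ((z, A1) # \<Gamma>')" using M'(2) a(1) by (intro ctxeq_cons) simp_all
      have "\<forall>\<Gamma>' M' A'. ctxeq ((z, A) # \<Gamma>) \<Gamma>' \<longrightarrow> I M' = I (usubst enc dec chi M x (Var z)) \<longrightarrow> I A' = I (usubst enc dec chi B y (Var z)) \<longrightarrow> HT \<Gamma>' M' A'"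
        using t_abs(5) z' by blast
      then show "HT ((z, A1) # \<Gamma>') (usubst enc dec chi M1 x' (Var z)) (usubst enc dec chi B2 y' (Var z))"
        using ce A'(3) M'(3) by simp
    qed
    have h1: "HT \<Gamma>' (Lam x' A1 M1) (Pi y' A1 B2)"
      by (rule T_abs[OF t_abs(1) hA[OF M'(2)]]) (auto intro: hB[OF M'(2)] hM)
    have h2: "HT \<Gamma>' (Pi y' A2 B2) (Cst s3)"
      by (rule T_prod[OF t_abs(1) hA[OF A'(2)]]) (auto intro: hB[OF A'(2)])
    have bc: "betaconv enc dec chi (Pi y' A1 B2) (Pi y' A2 B2)"
      using M'(2) A'(2) by (intro iota_betaconv I_Pi_eq) simp
    show "HT \<Gamma>' M' A'" unfolding M'(1) A'(1) by (rule T_conv[OF h1 bc h2])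
  qed
next
  case (t_app \<Gamma> M x A B N s)
  show ?case
  proof (intro allI impI)
    fix \<Gamma>' M' A' assume a: "ctxeq \<Gamma> \<Gamma>'" "I M' = I (App M N)" "I A' = I (usubst enc dec chi B x N)"
    obtain M1 N1 where M': "M' = App M1 N1" "I M1 = I M" "I N1 = I N" using I_App[OF a(2)] by blast
    have h1: "HT \<Gamma>' M1 (Pi x A B)" using t_app(2) a(1) M'(2) by simp
    have h2: "HT \<Gamma>' N1 A" using t_app(4) a(1) M'(3) by simp
    have e: "I (usubst enc dec chi B x N1) = I (usubst enc dec chi B x N)" using M'(3) by (rule I_usubst)
    have h3: "HT \<Gamma>' (usubst enc dec chi B x N1) (Cst s)" using t_app(6) a(1) e by simp
    have h4: "HT \<Gamma>' A' (Cst s)" using t_app(6) a(1) a(3) by simp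
    have bc: "betaconv enc dec chi (usubst enc dec chi B x N1) A'" using e a(3) by (intro iota_betaconv) simp
    show "HT \<Gamma>' M' A'" unfolding M'(1) by (rule T_conv[OF T_app[OF h1 h2 h3] bc h4])
  qed
next
  case (t_conv \<Gamma> M A B s)
  show ?case
  proof (intro allI impI)
    fix \<Gamma>' M' A' assume a: "ctxeq \<Gamma> \<Gamma>'" "I M' = I M" "I A' = I B"
    have h1: "HT \<Gamma>' M' A" using t_conv(2) a(1) a(2) by simp
    have h2: "HT \<Gamma>' A' (Cst s)" using t_conv(5) a(1) a(3) by simp
    have bc: "betaconv enc dec chi A A'" using t_conv(3) iota_betaconv[OF a(3)[symmetric]] by (rule bc_trans)
    show "HT \<Gamma>' M' A'" by (rule T_conv[OF h1 bc h2])
  qed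
qed

lemma AI: "HT \<Gamma> M A \<Longrightarrow> I M' = I M \<Longrightarrow> I A' = I A \<Longrightarrow> HT \<Gamma> M' A'"
  using AI_aux(2) ctxeq_refl by blast

lemma AI_iota: "HT \<Gamma> M A \<Longrightarrow> HT \<Gamma> (I M) (I A)"
  by (erule AI) (simp_all add: iota_idem)

lemma ren_comm:
  assumes "y \<notin> set (removeAll x (fv B))"
  shows "S (usubst enc dec chi B x (Var y)) (supd (\<lambda>w. I (\<sigma> w)) y (Var z)) =
         usubst enc dec chi (S B (supd \<sigma> x (Var (Xs enc dec chi \<sigma> (removeAll x (fv B)))))) (Xs enc dec chi \<sigma> (removeAll x (fv B))) (Var z)"
  unfolding usubst_def sact_comp
proof (rule sact_cong)
  fix w assume w: "w \<in> set (fv B)"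
  let ?x' = "Xs enc dec chi \<sigma> (removeAll x (fv B))"
  show "S (supd Var x (Var y) w) (supd (\<lambda>w. I (\<sigma> w)) y (Var z)) = S (supd \<sigma> x (Var ?x') w) (supd Var ?x' (Var z))"
  proof (cases "w = x")
    case False
    then have wy: "w \<noteq> y" using assms w by auto
    have "?x' \<notin> set (fv (\<sigma> w))" using w False by (intro Xs_fresh) simp
    then have "S (\<sigma> w) (supd Var ?x' (Var z)) = I (\<sigma> w)" by (rule fresh_subst_Var)
    then show ?thesis using False wy by (simp add: supd_def)
  qed (simp add: supd_def)
qed

lemma app_iota:
  "I (usubst enc dec chi (S B (supd \<sigma> x (Var (Xs enc dec chi \<sigma> (removeAll x (fv B)))))) (Xs enc dec chi \<sigma> (removeAll x (fv B))) (S N \<sigma>))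
   = I (S (usubst enc dec chi B x N) \<sigma>)"
proof -
  define x1 where "x1 = Xs enc dec chi \<sigma> (removeAll x (fv B))"
  have "I (usubst enc dec chi (S B (supd \<sigma> x (Var x1))) x1 (S N \<sigma>)) = S B (\<lambda>w. S (S (supd \<sigma> x (Var x1) w) (supd Var x1 (S N \<sigma>))) Var)"
    by (simp only: usubst_def sact_comp)
  also have "\<dots> = S B (\<lambda>w. S (S (supd Var x N w) \<sigma>) Var)"
  proof (rule sact_cong)
    fix w assume w: "w \<in> set (fv B)"
    show "S (S (supd \<sigma> x (Var x1) w) (supd Var x1 (S N \<sigma>))) Var = S (S (supd Var x N w) \<sigma>) Var"
    proof (cases "w = x")
      case False
      then have "x1 \<notin> set (fv (\<sigma> w))" unfolding x1_def using w by (intro Xs_fresh) simp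
      then have "S (\<sigma> w) (supd Var x1 (S N \<sigma>)) = S (\<sigma> w) Var" by (rule fresh_subst_Var)
      then show ?thesis using False by (simp add: supd_def iota_idem)
    qed (simp add: supd_def)
  qed
  also have "\<dots> = I (S (usubst enc dec chi B x N) \<sigma>)"
    by (simp only: usubst_def sact_comp)
  finally show ?thesis unfolding x1_def .
qed

lemma wt_ext:
  assumes okD: "OK ((z, S A \<sigma>) # \<Delta>)"
    and wt: "\<And>w D. (w, D) \<in> set \<Gamma> \<Longrightarrow> HT \<Delta> (\<sigma> w) (S D \<sigma>)"
    and y: "y \<notin> set (map fst \<Gamma>)" "y \<notin> set (fv A)" "\<And>w D. (w, D) \<in> set \<Gamma> \<Longrightarrow> y \<notin> set (fv D)"
    and mem: "(w, D) \<in> set ((y, A) # \<Gamma>)"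
  shows "HT ((z, S A \<sigma>) # \<Delta>) (supd (\<lambda>w. I (\<sigma> w)) y (Var z) w) (S D (supd (\<lambda>w. I (\<sigma> w)) y (Var z)))"
proof (cases "w = y")
  case True
  then have D: "D = A" using mem y(1) by force
  have e: "S A (supd (\<lambda>w. I (\<sigma> w)) y (Var z)) = I (S A \<sigma>)"
    unfolding sact_comp using y(2) by (intro sact_cong) (auto simp: supd_def)
  have "HT ((z, S A \<sigma>) # \<Delta>) (Var z) (S A \<sigma>)" using okD by (rule T_var) simp
  then have "HT ((z, S A \<sigma>) # \<Delta>) (Var z) (I (S A \<sigma>))" by (rule AI) (simp_all add: iota_idem)
  then show ?thesis using True D e by (simp add: supd_def)
next
  case False
  then have wD: "(w, D) \<in> set \<Gamma>" using mem by simp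
  have e: "S D (supd (\<lambda>w. I (\<sigma> w)) y (Var z)) = I (S D \<sigma>)"
    unfolding sact_comp using y(3)[OF wD] by (intro sact_cong) (auto simp: supd_def)
  have "HT ((z, S A \<sigma>) # \<Delta>) (\<sigma> w) (S D \<sigma>)" using wt[OF wD] okD by (rule weaken_cons)
  then have "HT ((z, S A \<sigma>) # \<Delta>) (I (\<sigma> w)) (I (S D \<sigma>))" by (rule AI_iota)
  then show ?thesis using False e by (simp add: supd_def)
qed

lemma fresh_for_ctx:
  fixes \<Gamma> :: "('c, 'v) ctx" and A B M :: "('c, 'v) trm"
  shows "\<exists>y. y \<notin> set (map fst \<Gamma>) \<and> y \<notin> set (fv A) \<and> y \<notin> set (fv B) \<and> y \<notin> set (fv M) \<and> (\<forall>w D. (w, D) \<in> set \<Gamma> \<longrightarrow> y \<notin> set (fv D))"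
proof -
  obtain y where y: "y \<notin> set (map fst \<Gamma> @ fv A @ fv B @ fv M @ concat (map (\<lambda>p. fv (snd p)) \<Gamma>))"
    using fresh_list[of "map fst \<Gamma> @ fv A @ fv B @ fv M @ concat (map (\<lambda>p. fv (snd p)) \<Gamma>)"] by blast
  then show ?thesis by force
qed

lemma SL_aux: "OK \<Gamma> \<Longrightarrow> True"
  "HT \<Gamma> M A \<Longrightarrow> \<forall>\<sigma> \<Delta>. OK \<Delta> \<longrightarrow> (\<forall>w D. (w, D) \<in> set \<Gamma> \<longrightarrow> HT \<Delta> (\<sigma> w) (S D \<sigma>)) \<longrightarrow> HT \<Delta> (S M \<sigma>) (S A \<sigma>)"
proof (induct rule: ctx_ok_has_type.inducts)
  case (t_sort \<Gamma> s1 s2) then show ?case by (auto intro: T_sort)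
next
  case (t_var \<Gamma> x A) then show ?case by auto
next
  case (t_prod s1 s2 s3 \<Gamma> A B x)
  show ?case
  proof (intro allI impI)
    fix \<sigma> \<Delta> assume okD: "OK \<Delta>" and wt0: "\<forall>w D. (w, D) \<in> set \<Gamma> \<longrightarrow> HT \<Delta> (\<sigma> w) (S D \<sigma>)"
    define x' where "x' = Xs enc dec chi \<sigma> (removeAll x (fv B))"
    have hA: "HT \<Delta> (S A \<sigma>) (Cst s1)" using t_prod(3) okD wt0 by force
    have l: "S (Pi x A B) \<sigma> = Pi x' (S A \<sigma>) (S B (supd \<sigma> x (Var x')))" unfolding x'_def by (simp only: sact.simps Let_def)
    have "HT \<Delta> (Pi x' (S A \<sigma>) (S B (supd \<sigma> x (Var x')))) (Cst s3)"
    proof (rule T_prod[OF t_prod(1) hA], intro allI impI)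
      fix z assume z: "z \<notin> set (map fst \<Delta>)"
      have okD': "OK ((z, S A \<sigma>) # \<Delta>)" by (rule Ok_cons[OF okD hA z])
      obtain y where y: "y \<notin> set (map fst \<Gamma>)" "y \<notin> set (fv A)" "y \<notin> set (fv B)"
        "\<And>w D. (w, D) \<in> set \<Gamma> \<Longrightarrow> y \<notin> set (fv D)" using fresh_for_ctx by blast
      have IH: "\<forall>\<sigma> \<Delta>. OK \<Delta> \<longrightarrow> (\<forall>w D. (w, D) \<in> set ((y, A) # \<Gamma>) \<longrightarrow> HT \<Delta> (\<sigma> w) (S D \<sigma>)) \<longrightarrow>
          HT \<Delta> (S (usubst enc dec chi B x (Var y)) \<sigma>) (S (Cst s2) \<sigma>)" using t_prod(4) y(1) by blast
      have wt: "\<forall>w D. (w, D) \<in> set ((y, A) # \<Gamma>) \<longrightarrow> HT ((z, S A \<sigma>) # \<Delta>) (supd (\<lambda>w. I (\<sigma> w)) y (Var z) w) (S D (supd (\<lambda>w. I (\<sigma> w)) y (Var z)))"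
      proof (intro allI impI)
        fix w D assume mem: "(w, D) \<in> set ((y, A) # \<Gamma>)"
        show "HT ((z, S A \<sigma>) # \<Delta>) (supd (\<lambda>w. I (\<sigma> w)) y (Var z) w) (S D (supd (\<lambda>w. I (\<sigma> w)) y (Var z)))"
          by (rule wt_ext[OF okD' _ y(1) y(2) _ mem]) (use wt0 y(4) in auto)
      qed
      have "HT ((z, S A \<sigma>) # \<Delta>) (S (usubst enc dec chi B x (Var y)) (supd (\<lambda>w. I (\<sigma> w)) y (Var z))) (Cst s2)"
        using IH okD' wt by auto
      then show "HT ((z, S A \<sigma>) # \<Delta>) (usubst enc dec chi (S B (supd \<sigma> x (Var x'))) x' (Var z)) (Cst s2)"
        unfolding x'_def ren_comm[of y x B, OF _] using y(3) by (simp add: ren_comm)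
    qed
    then show "HT \<Delta> (S (Pi x A B) \<sigma>) (S (Cst s3) \<sigma>)" using l by simp
  qed
next
  case (t_abs s1 s2 s3 \<Gamma> A B y M x)
  show ?case
  proof (intro allI impI)
    fix \<sigma> \<Delta> assume okD: "OK \<Delta>" and wt0: "\<forall>w D. (w, D) \<in> set \<Gamma> \<longrightarrow> HT \<Delta> (\<sigma> w) (S D \<sigma>)"
    define x' where "x' = Xs enc dec chi \<sigma> (removeAll x (fv M))"
    define y' where "y' = Xs enc dec chi \<sigma> (removeAll y (fv B))"
    have hA: "HT \<Delta> (S A \<sigma>) (Cst s1)" using t_abs(3) okD wt0 by force
    have l: "S (Lam x A M) \<sigma> = Lam x' (S A \<sigma>) (S M (supd \<sigma> x (Var x')))" unfolding x'_def by (simp only: sact.simps Let_def)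
    have l2: "S (Pi y A B) \<sigma> = Pi y' (S A \<sigma>) (S B (supd \<sigma> y (Var y')))" unfolding y'_def by (simp only: sact.simps Let_def)
    have "HT \<Delta> (Lam x' (S A \<sigma>) (S M (supd \<sigma> x (Var x')))) (Pi y' (S A \<sigma>) (S B (supd \<sigma> y (Var y'))))"
    proof (rule T_abs[OF t_abs(1) hA]; intro allI impI)
      fix z assume z: "z \<notin> set (map fst \<Delta>)"
      have okD': "OK ((z, S A \<sigma>) # \<Delta>)" by (rule Ok_cons[OF okD hA z])
      obtain w0 where y: "w0 \<notin> set (map fst \<Gamma>)" "w0 \<notin> set (fv A)" "w0 \<notin> set (fv B)" "w0 \<notin> set (fv M)"
        "\<And>w D. (w, D) \<in> set \<Gamma> \<Longrightarrow> w0 \<notin> set (fv D)" using fresh_for_ctx by blast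
      have IH1: "\<forall>\<sigma> \<Delta>. OK \<Delta> \<longrightarrow> (\<forall>w D. (w, D) \<in> set ((w0, A) # \<Gamma>) \<longrightarrow> HT \<Delta> (\<sigma> w) (S D \<sigma>)) \<longrightarrow>
          HT \<Delta> (S (usubst enc dec chi B y (Var w0)) \<sigma>) (S (Cst s2) \<sigma>)" using t_abs(4) y(1) by blast
      have IH2: "\<forall>\<sigma> \<Delta>. OK \<Delta> \<longrightarrow> (\<forall>w D. (w, D) \<in> set ((w0, A) # \<Gamma>) \<longrightarrow> HT \<Delta> (\<sigma> w) (S D \<sigma>)) \<longrightarrow>
          HT \<Delta> (S (usubst enc dec chi M x (Var w0)) \<sigma>) (S (usubst enc dec chi B y (Var w0)) \<sigma>)" using t_abs(5) y(1) by blast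
      have wt: "\<forall>w D. (w, D) \<in> set ((w0, A) # \<Gamma>) \<longrightarrow> HT ((z, S A \<sigma>) # \<Delta>) (supd (\<lambda>w. I (\<sigma> w)) w0 (Var z) w) (S D (supd (\<lambda>w. I (\<sigma> w)) w0 (Var z)))"
      proof (intro allI impI)
        fix w D assume mem: "(w, D) \<in> set ((w0, A) # \<Gamma>)"
        show "HT ((z, S A \<sigma>) # \<Delta>) (supd (\<lambda>w. I (\<sigma> w)) w0 (Var z) w) (S D (supd (\<lambda>w. I (\<sigma> w)) w0 (Var z)))"
          by (rule wt_ext[OF okD' _ y(1) y(2) _ mem]) (use wt0 y(5) in auto)
      qed
      have eB: "S (usubst enc dec chi B y (Var w0)) (supd (\<lambda>w. I (\<sigma> w)) w0 (Var z)) = usubst enc dec chi (S B (supd \<sigma> y (Var y'))) y' (Var z)"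
        unfolding y'_def using y(3) by (intro ren_comm) simp
      have eM: "S (usubst enc dec chi M x (Var w0)) (supd (\<lambda>w. I (\<sigma> w)) w0 (Var z)) = usubst enc dec chi (S M (supd \<sigma> x (Var x'))) x' (Var z)"
        unfolding x'_def using y(4) by (intro ren_comm) simp
      have r1: "HT ((z, S A \<sigma>) # \<Delta>) (S (usubst enc dec chi B y (Var w0)) (supd (\<lambda>w. I (\<sigma> w)) w0 (Var z))) (S (Cst s2) (supd (\<lambda>w. I (\<sigma> w)) w0 (Var z)))"
        using IH1 okD' wt by blast
      have r2: "HT ((z, S A \<sigma>) # \<Delta>) (S (usubst enc dec chi M x (Var w0)) (supd (\<lambda>w. I (\<sigma> w)) w0 (Var z))) (S (usubst enc dec chi B y (Var w0)) (supd (\<lambda>w. I (\<sigma> w)) w0 (Var z)))"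
        using IH2 okD' wt by blast
      show "HT ((z, S A \<sigma>) # \<Delta>) (usubst enc dec chi (S B (supd \<sigma> y (Var y'))) y' (Var z)) (Cst s2)"
        using r1 unfolding eB by simp
      show "HT ((z, S A \<sigma>) # \<Delta>) (usubst enc dec chi (S M (supd \<sigma> x (Var x'))) x' (Var z)) (usubst enc dec chi (S B (supd \<sigma> y (Var y'))) y' (Var z))"
        using r2 unfolding eB eM .
    qed
    then show "HT \<Delta> (S (Lam x A M) \<sigma>) (S (Pi y A B) \<sigma>)" using l l2 by simp
  qed
next
  case (t_app \<Gamma> M x A B N s)
  show ?case
  proof (intro allI impI)
    fix \<sigma> \<Delta> assume okD: "OK \<Delta>" and wt0: "\<forall>w D. (w, D) \<in> set \<Gamma> \<longrightarrow> HT \<Delta> (\<sigma> w) (S D \<sigma>)"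
    define x' where "x' = Xs enc dec chi \<sigma> (removeAll x (fv B))"
    have l: "S (Pi x A B) \<sigma> = Pi x' (S A \<sigma>) (S B (supd \<sigma> x (Var x')))" unfolding x'_def by (simp only: sact.simps Let_def)
    have h1: "HT \<Delta> (S M \<sigma>) (Pi x' (S A \<sigma>) (S B (supd \<sigma> x (Var x'))))" using t_app(2) okD wt0 l by metis
    have h2: "HT \<Delta> (S N \<sigma>) (S A \<sigma>)" using t_app(4) okD wt0 by blast
    have h3: "HT \<Delta> (S (usubst enc dec chi B x N) \<sigma>) (Cst s)" using t_app(6) okD wt0 by force
    have e: "I (usubst enc dec chi (S B (supd \<sigma> x (Var x'))) x' (S N \<sigma>)) = I (S (usubst enc dec chi B x N) \<sigma>)"
      unfolding x'_def by (rule app_iota)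
    have h4: "HT \<Delta> (usubst enc dec chi (S B (supd \<sigma> x (Var x'))) x' (S N \<sigma>)) (Cst s)"
      using h3 e by (rule AI) simp
    have "HT \<Delta> (App (S M \<sigma>) (S N \<sigma>)) (usubst enc dec chi (S B (supd \<sigma> x (Var x'))) x' (S N \<sigma>))"
      by (rule T_app[OF h1 h2 h4])
    then have "HT \<Delta> (App (S M \<sigma>) (S N \<sigma>)) (S (usubst enc dec chi B x N) \<sigma>)"
      by (rule AI) (simp_all add: e)
    then show "HT \<Delta> (S (App M N) \<sigma>) (S (usubst enc dec chi B x N) \<sigma>)" by simp
  qed
next
  case (t_conv \<Gamma> M A B s)
  show ?case
  proof (intro allI impI)
    fix \<sigma> \<Delta> assume okD: "OK \<Delta>" and wt0: "\<forall>w D. (w, D) \<in> set \<Gamma> \<longrightarrow> HT \<Delta> (\<sigma> w) (S D \<sigma>)"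
    have h1: "HT \<Delta> (S M \<sigma>) (S A \<sigma>)" using t_conv(2) okD wt0 by blast
    have h2: "HT \<Delta> (S B \<sigma>) (Cst s)" using t_conv(5) okD wt0 by force
    show "HT \<Delta> (S M \<sigma>) (S B \<sigma>)" by (rule T_conv[OF h1 betaconv_subst[OF t_conv(3)] h2])
  qed
qed auto

lemma SL: "HT \<Gamma> M A \<Longrightarrow> OK \<Delta> \<Longrightarrow> (\<And>w D. (w, D) \<in> set \<Gamma> \<Longrightarrow> HT \<Delta> (\<sigma> w) (S D \<sigma>)) \<Longrightarrow> HT \<Delta> (S M \<sigma>) (S A \<sigma>)"
  using SL_aux(2) by blast

lemma CT_aux: "OK \<Gamma> \<Longrightarrow> True" "HT \<Gamma> M A \<Longrightarrow> (\<exists>s. A = Cst s) \<or> (\<exists>s. HT \<Gamma> A (Cst s))"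
proof (induct rule: ctx_ok_has_type.inducts)
  case (t_var \<Gamma> x A) then show ?case using ok_entries(1) by blast
next
  case (t_abs s1 s2 s3 \<Gamma> A B y M x)
  have "HT \<Gamma> (Pi y A B) (Cst s3)"
    by (rule T_prod[OF t_abs(1) t_abs(2)]) (use t_abs(4) in blast)
  then show ?case by blast
qed auto

lemma Pi_inv_aux: "OK \<Gamma> \<Longrightarrow> True"
  "HT \<Gamma> P C \<Longrightarrow> \<forall>x A B. P = Pi x A B \<longrightarrow> (\<exists>s1 s2. HT \<Gamma> A (Cst s1) \<and>
      (\<forall>z. z \<notin> set (map fst \<Gamma>) \<longrightarrow> HT ((z, A) # \<Gamma>) (usubst enc dec chi B x (Var z)) (Cst s2)))"
proof (induct rule: ctx_ok_has_type.inducts)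
  case (t_prod s1 s2 s3 \<Gamma> A B x) then show ?case by blast
qed auto

lemma rename:
  assumes h: "HT ((y, A) # \<Gamma>) M C" and z: "z \<notin> set (map fst \<Gamma>)"
  shows "HT ((z, A) # \<Gamma>) (S M (supd Var y (Var z))) (S C (supd Var y (Var z)))"
proof -
  have "OK ((y, A) # \<Gamma>)" using h by (rule typ_ok(2))
  then obtain s where okG: "OK \<Gamma>" and hA: "HT \<Gamma> A (Cst s)" and y: "y \<notin> set (map fst \<Gamma>)"
    by (cases rule: ctx_ok.cases) auto
  have okz: "OK ((z, A) # \<Gamma>)" by (rule Ok_cons[OF okG hA z])
  show ?thesis
  proof (rule SL[OF h okz])
    fix w D assume mem: "(w, D) \<in> set ((y, A) # \<Gamma>)"
    show "HT ((z, A) # \<Gamma>) (supd Var y (Var z) w) (S D (supd Var y (Var z)))"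
    proof (cases "w = y")
      case True
      then have D: "D = A" using mem y by force
      have "y \<notin> set (fv A)" using fv_typ(2)[OF hA] y by blast
      then have e: "S A (supd Var y (Var z)) = I A" by (rule fresh_subst_Var)
      have "HT ((z, A) # \<Gamma>) (Var z) A" using okz by (rule T_var) simp
      then have "HT ((z, A) # \<Gamma>) (Var z) (I A)" by (rule AI) (simp_all add: iota_idem)
      then show ?thesis using True D e by (simp add: supd_def)
    next
      case False
      then have wD: "(w, D) \<in> set \<Gamma>" using mem by simp
      have "y \<notin> set (fv D)" using ok_fv[OF okG wD] y by blast
      then have e: "S D (supd Var y (Var z)) = I D" by (rule fresh_subst_Var)
      have "HT ((z, A) # \<Gamma>) (Var w) D" using okz wD by (intro T_var) auto
      then have "HT ((z, A) # \<Gamma>) (Var w) (I D)" by (rule AI) (simp_all add: iota_idem)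
      then show ?thesis using False e by (simp add: supd_def)
    qed
  qed
qed

lemma subst1:
  assumes h: "HT ((z, A) # \<Gamma>) M C" and hN: "HT \<Gamma> N A"
  shows "HT \<Gamma> (S M (supd Var z N)) (S C (supd Var z N))"
proof -
  have "OK ((z, A) # \<Gamma>)" using h by (rule typ_ok(2))
  then obtain s where okG: "OK \<Gamma>" and hA: "HT \<Gamma> A (Cst s)" and y: "z \<notin> set (map fst \<Gamma>)"
    by (cases rule: ctx_ok.cases) auto
  show ?thesis
  proof (rule SL[OF h okG])
    fix w D assume mem: "(w, D) \<in> set ((z, A) # \<Gamma>)"
    show "HT \<Gamma> (supd Var z N w) (S D (supd Var z N))"
    proof (cases "w = z")
      case True
      then have D: "D = A" using mem y by force
      have "z \<notin> set (fv A)" using fv_typ(2)[OF hA] y by blast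
      then have e: "S A (supd Var z N) = I A" by (rule fresh_subst_Var)
      have "HT \<Gamma> N (I A)" using hN by (rule AI) (simp_all add: iota_idem)
      then show ?thesis using True D e by (simp add: supd_def)
    next
      case False
      then have wD: "(w, D) \<in> set \<Gamma>" using mem by simp
      have "z \<notin> set (fv D)" using ok_fv[OF okG wD] y by blast
      then have e: "S D (supd Var z N) = I D" by (rule fresh_subst_Var)
      have "HT \<Gamma> (Var w) D" using okG wD by (intro T_var) auto
      then have "HT \<Gamma> (Var w) (I D)" by (rule AI) (simp_all add: iota_idem)
      then show ?thesis using False e by (simp add: supd_def)
    qed
  qed
qed

lemma ren_twice_u: "y \<notin> set (removeAll x (fv B)) \<Longrightarrow>
  S (usubst enc dec chi B x (Var y)) (supd Var y N) = usubst enc dec chi B x N"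
  unfolding usubst_def by (rule ren_twice)

lemma main_aux:
  "ctx_ok_s enc dec chi Ax Rl \<Gamma> \<Longrightarrow> OK \<Gamma>"
  "has_type_s enc dec chi Ax Rl \<Gamma> M A \<Longrightarrow> HT \<Gamma> M A"
proof (induct rule: ctx_ok_s_has_type_s.inducts)
  case oks_nil then show ?case by (rule Ok_nil)
next
  case (oks_cons \<Gamma> A s x) then show ?case by (blast intro: Ok_cons)
next
  case (ts_sort \<Gamma> s1 s2) then show ?case by (blast intro: T_sort)
next
  case (ts_var \<Gamma> x A) then show ?case by (blast intro: T_var)
next
  case (ts_prod s1 s2 s3 y x B \<Gamma> A)
  show ?case
  proof (rule T_prod[OF ts_prod(1) ts_prod(4)], intro allI impI)
    fix z assume z: "z \<notin> set (map fst \<Gamma>)"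
    have "HT ((z, A) # \<Gamma>) (S (usubst enc dec chi B x (Var y)) (supd Var y (Var z))) (S (Cst s2) (supd Var y (Var z)))"
      using ts_prod(6) z by (rule rename)
    then show "HT ((z, A) # \<Gamma>) (usubst enc dec chi B x (Var z)) (Cst s2)"
      using ren_twice_u[OF ts_prod(2)] by simp
  qed
next
  case (ts_abs s1 s2 s3 z x M y B \<Gamma> A)
  show ?case
  proof (rule T_abs[OF ts_abs(1) ts_abs(5)]; intro allI impI)
    fix z' assume z': "z' \<notin> set (map fst \<Gamma>)"
    have "HT ((z', A) # \<Gamma>) (S (usubst enc dec chi B y (Var z)) (supd Var z (Var z'))) (S (Cst s2) (supd Var z (Var z')))"
      using ts_abs(7) z' by (rule rename)
    then show "HT ((z', A) # \<Gamma>) (usubst enc dec chi B y (Var z')) (Cst s2)"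
      using ren_twice_u[OF ts_abs(3)] by simp
    have "HT ((z', A) # \<Gamma>) (S (usubst enc dec chi M x (Var z)) (supd Var z (Var z'))) (S (usubst enc dec chi B y (Var z)) (supd Var z (Var z')))"
      using ts_abs(9) z' by (rule rename)
    then show "HT ((z', A) # \<Gamma>) (usubst enc dec chi M x (Var z')) (usubst enc dec chi B y (Var z'))"
      using ren_twice_u[OF ts_abs(3)] ren_twice_u[OF ts_abs(2)] by simp
  qed
next
  case (ts_app \<Gamma> M x A B N)
  have hM: "HT \<Gamma> M (Pi x A B)" and hN: "HT \<Gamma> N A" using ts_app by auto
  obtain s where "HT \<Gamma> (Pi x A B) (Cst s)" using CT_aux(2)[OF hM] by auto
  then obtain s1 s2 where inv: "\<forall>z. z \<notin> set (map fst \<Gamma>) \<longrightarrow> HT ((z, A) # \<Gamma>) (usubst enc dec chi B x (Var z)) (Cst s2)"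
    using Pi_inv_aux(2) by blast
  obtain z where z: "z \<notin> set (map fst \<Gamma> @ fv B)" using fresh_list by blast
  then have "HT ((z, A) # \<Gamma>) (usubst enc dec chi B x (Var z)) (Cst s2)" using inv by simp
  then have "HT \<Gamma> (S (usubst enc dec chi B x (Var z)) (supd Var z N)) (S (Cst s2) (supd Var z N))"
    using hN by (rule subst1)
  moreover have "z \<notin> set (removeAll x (fv B))" using z by simp
  then have "S (usubst enc dec chi B x (Var z)) (supd Var z N) = usubst enc dec chi B x N" by (rule ren_twice_u)
  ultimately have "HT \<Gamma> (usubst enc dec chi B x N) (Cst s2)" by simp
  then show ?case by (rule T_app[OF hM hN])
next
  case (ts_conv \<Gamma> M A B s) then show ?case by (blast intro: T_conv)
qed

end

theorem mainTheorem20: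
  fixes enc :: "'v \<Rightarrow> nat" and dec :: "nat \<Rightarrow> 'v" and chi :: "nat list \<Rightarrow> nat"
    and Ax :: "'c \<Rightarrow> 'c \<Rightarrow> bool" and Rl :: "'c \<Rightarrow> 'c \<Rightarrow> 'c \<Rightarrow> bool"
  assumes enc_dec: "\<And>n. enc (dec n) = n"
    and chi_fresh: "\<And>ns. chi ns \<notin> set ns"
  shows "(\<forall>\<Gamma>::('c, 'v) ctx. ctx_ok_s enc dec chi Ax Rl \<Gamma> \<longrightarrow> ctx_ok enc dec chi Ax Rl \<Gamma>)
       \<and> (\<forall>(\<Gamma>::('c, 'v) ctx) M A. has_type_s enc dec chi Ax Rl \<Gamma> M A \<longrightarrow> has_type enc dec chi Ax Rl \<Gamma> M A)"
proof -
  interpret P: pts2 enc dec chi Ax Rl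
    by unfold_locales (rule enc_dec, rule chi_fresh)
  show ?thesis using P.main_aux by blast
qed

end
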